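(* Let $T:\mathbb{N}_+\to\mathbb{N}_+$ with $T\in\Omega(n)$ be the halting function of some Turing machine (i.e. some Turing machine is a $T$-halter). Then there is an unbounded multiway system whose growth function has a pair of tight bounds $(a,b)$ with $a,b\in\mathcal{O}(T_*^{-1})$, where $T_*=L_{\mathbb{N}_+}\big(n\mapsto\sum_{k=1}^n T(k)\big)$.
   Context: A (string-based) multiway system is a triple $M=(R,s_{\text{init}},\Sigma)$ with $\Sigma$ a finite alphabet, $R$ a finite set of string replacement rules $r\to t$ ($r,t\in\Sigma^*$) and initial string $s_{\text{init}}\in\Sigma^*$. Its states graph has as vertices the strings reachable from $s_{\text{init}}$, with an edge $u\to v$ whenever $v$ arises from $u$ by replacing one occurrence of some rule's left side by its right side. The growth function $g_M(n)$ is the number of states at shortest-path distance $n-1$ from $s_{\text{init}}$. $M$ is finite if $g_M(n)=0$ for some $n$, bounded if not finite and $g_M$ bounded, unbounded otherwise. For an unbounded system with growth function $a$: $\overline{a}_n=\max\{a_k:k\le n\}$, $\underline{a}_n=\max(\{a_k:k\le n,\ \forall l\ge k: a_l\ge a_k\}\cup\{1\})$. For $h:\mathbb{N}_+\to\mathbb{N}_+$ and infinite $S\subseteq\mathbb{N}_+$, $L_S(h)$ is the polygonal chain from $(0,0)$ through the points $(n,h(n))$, $n\in S$, regarded as a continuous function $\mathbb{R}_{\ge0}\to\mathbb{R}_{\ge0}$. Continuous $f,g:\mathbb{R}_{\ge0}\to\mathbb{R}_{\ge0}$ are tight bounds of $a$ if $f\in\Theta(L_{\mathbb{N}_+}(\overline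 a))$ and $g\in\Theta(L_{\mathbb{N}_+}(\underline a))$. For $T:\mathbb{N}_+\to\mathbb{N}_+$, a $T$-halter is a deterministic Turing machine (blank symbol $0$, with symbol $1$ in its alphabet) which, when started in its start state on an otherwise blank tape containing $n$ in unary (a block of $n$ ones) with the head on the first one, executes exactly $T(n)$ operations and then halts, at which point the tape contains $n+1$ in unary, preceded and followed by at least one blank, with the head on or to the left of the first digit; $T$ is then called its halting function. $T_*^{-1}$ denotes the inverse of the (strictly increasing, unbounded) function $T_*$. *)

theory Defs
  imports Complex_Main "HOL-Library.Landau_Symbols" "HOL-Library.Infinite_Set"
begin

text \<open>A multiway system (R, s_init, Sigma); the alphabet is encoded as a finite
  set of natural numbers (any finite alphabet can be so encoded).\<close>

definition mw_valid :: "(nat list \<times> nat list) set \<Rightarrow> nat list \<Rightarrow> nat set \<Rightarrow> bool" where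
  "mw_valid R s \<Sigma> \<longleftrightarrow> finite \<Sigma> \<and> finite R \<and> s \<in> lists \<Sigma> \<and>
     (\<forall>(r, t) \<in> R. r \<in> lists \<Sigma> \<and> t \<in> lists \<Sigma>)"

definition mw_step :: "(nat list \<times> nat list) set \<Rightarrow> (nat list \<times> nat list) set" where
  "mw_step R = {(u, v). \<exists>x y r t. (r, t) \<in> R \<and> u = x @ r @ y \<and> v = x @ t @ y}"

definition mw_layer :: "(nat list \<times> nat list) set \<Rightarrow> nat list \<Rightarrow> nat \<Rightarrow> nat list set" where
  "mw_layer R s k = {v. (s, v) \<in> mw_step R ^^ k \<and> (\<forall>j<k. (s, v) \<notin> mw_step R ^^ j)}"

text \<open>Growth function g(n) = number of states at distance n-1 (meaningful for n \<ge> 1).\<close>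
definition mw_growth :: "(nat list \<times> nat list) set \<Rightarrow> nat list \<Rightarrow> nat \<Rightarrow> nat" where
  "mw_growth R s n = card (mw_layer R s (n - 1))"

definition mw_finite :: "(nat list \<times> nat list) set \<Rightarrow> nat list \<Rightarrow> bool" where
  "mw_finite R s \<longleftrightarrow> (\<exists>n\<ge>1. mw_growth R s n = 0)"

definition mw_bounded :: "(nat list \<times> nat list) set \<Rightarrow> nat list \<Rightarrow> bool" where
  "mw_bounded R s \<longleftrightarrow> \<not> mw_finite R s \<and> (\<exists>B. \<forall>n\<ge>1. mw_growth R s n \<le> B)"

definition mw_unbounded :: "(nat list \<times> nat list) set \<Rightarrow> nat list \<Rightarrow> bool" where
  "mw_unbounded R s \<longleftrightarrow> \<not> mw_finite R s \<and> \<not> mw_bounded R s"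

definition upper_env :: "(nat \<Rightarrow> nat) \<Rightarrow> nat \<Rightarrow> nat" where
  "upper_env a n = Max {a k | k. 1 \<le> k \<and> k \<le> n}"

definition lower_env :: "(nat \<Rightarrow> nat) \<Rightarrow> nat \<Rightarrow> nat" where
  "lower_env a n = Max ({a k | k. 1 \<le> k \<and> k \<le> n \<and> (\<forall>l\<ge>k. a l \<ge> a k)} \<union> {1})"

text \<open>Polygonal chain from (0,0) through the points (n, h n), n \<in> S (S infinite
  subset of the positive integers), in increasing order of n.\<close>
definition Lchain :: "nat set \<Rightarrow> (nat \<Rightarrow> nat) \<Rightarrow> real \<Rightarrow> real" where
  "Lchain S h x =
     (let q = (\<lambda>i. if i = 0 then 0 else real (enumerate S (i - 1)));
          v = (\<lambda>i. if i = 0 then 0 else real (h (enumerate S (i - 1))));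
          i = (LEAST i. x < q (Suc i))
      in v i + (v (Suc i) - v i) * (x - q i) / (q (Suc i) - q i))"

definition pos_nat :: "nat set" where
  "pos_nat = {n. 1 \<le> n}"

definition tight_bounds :: "(nat \<Rightarrow> nat) \<Rightarrow> (real \<Rightarrow> real) \<Rightarrow> (real \<Rightarrow> real) \<Rightarrow> bool" where
  "tight_bounds a f g \<longleftrightarrow>
     continuous_on {0..} f \<and> continuous_on {0..} g \<and>
     (\<forall>x\<ge>0. f x \<ge> 0) \<and> (\<forall>x\<ge>0. g x \<ge> 0) \<and>
     f \<in> \<Theta>(Lchain pos_nat (upper_env a)) \<and>
     g \<in> \<Theta>(Lchain pos_nat (lower_env a))"

text \<open>A deterministic single-tape Turing machine: finite state set Q, finite tape
  alphabet Gamma containing blank 0 and 1, start state q0, and a partial transition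
  function delta q a = Some (q', b, right) (right = True moves right, False left);
  the machine halts when delta is undefined.\<close>

type_synonym tm_delta = "nat \<Rightarrow> nat \<Rightarrow> (nat \<times> nat \<times> bool) option"
type_synonym tm_config = "nat \<times> (int \<Rightarrow> nat) \<times> int"

definition tm_valid :: "nat set \<Rightarrow> nat set \<Rightarrow> tm_delta \<Rightarrow> nat \<Rightarrow> bool" where
  "tm_valid Q \<Gamma> \<delta> q0 \<longleftrightarrow> finite Q \<and> finite \<Gamma> \<and> 0 \<in> \<Gamma> \<and> 1 \<in> \<Gamma> \<and> q0 \<in> Q \<and>
     (\<forall>q a q' b d. \<delta> q a = Some (q', b, d) \<longrightarrow> q \<in> Q \<and> a \<in> \<Gamma> \<and> q' \<in> Q \<and> b \<in> \<Gamma>)"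

definition tm_step :: "tm_delta \<Rightarrow> tm_config \<Rightarrow> tm_config option" where
  "tm_step \<delta> c = (case c of (q, tp, h) \<Rightarrow>
     (case \<delta> q (tp h) of
        None \<Rightarrow> None
      | Some (q', b, d) \<Rightarrow> Some (q', tp(h := b), if d then h + 1 else h - 1)))"

fun tm_run :: "tm_delta \<Rightarrow> tm_config \<Rightarrow> nat \<Rightarrow> tm_config option" where
  "tm_run \<delta> c 0 = Some c"
| "tm_run \<delta> c (Suc k) = Option.bind (tm_run \<delta> c k) (tm_step \<delta>)"

definition unary_tape :: "int \<Rightarrow> nat \<Rightarrow> int \<Rightarrow> nat" where
  "unary_tape p n = (\<lambda>i. if p \<le> i \<and> i < p + int n then 1 else 0)"

text \<open>T-halter: on input n \<ge> 1 in unary (head on first one) it makes exactly T n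
  steps and halts with n+1 in unary on an otherwise blank tape, head on or left of
  the first digit.\<close>
definition is_halter :: "(nat \<Rightarrow> nat) \<Rightarrow> nat set \<Rightarrow> nat set \<Rightarrow> tm_delta \<Rightarrow> nat \<Rightarrow> bool" where
  "is_halter T Q \<Gamma> \<delta> q0 \<longleftrightarrow> tm_valid Q \<Gamma> \<delta> q0 \<and>
     (\<forall>n\<ge>1. \<exists>q tp h p. tm_run \<delta> (q0, unary_tape 0 n, 0) (T n) = Some (q, tp, h) \<and>
        tm_step \<delta> (q, tp, h) = None \<and> tp = unary_tape p (Suc n) \<and> h \<le> p)"

definition Tstar :: "(nat \<Rightarrow> nat) \<Rightarrow> real \<Rightarrow> real" where
  "Tstar T = Lchain pos_nat (\<lambda>n. \<Sum>k=1..n. T k)"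

definition Tstar_inv :: "(nat \<Rightarrow> nat) \<Rightarrow> real \<Rightarrow> real" where
  "Tstar_inv T y = (THE x. 0 \<le> x \<and> Tstar T x = y)"

end

theory Submission
  imports Defs
begin

definition enc :: "nat \<Rightarrow> nat" where "enc a = 4 * a"
definition stq :: "nat \<Rightarrow> nat" where "stq q = 4 * q + 1"
definition cf :: "nat list \<Rightarrow> bool" where "cf xs \<longleftrightarrow> (\<forall>x\<in>set xs. even x)"

lemma enc_inj[simp]: "enc a = enc b \<longleftrightarrow> a = b" by (simp add: enc_def)
lemma stq_inj[simp]: "stq a = stq b \<longleftrightarrow> a = b" by (simp add: stq_def)
lemma enc_even[simp]: "even (enc a)" by (simp add: enc_def)
lemma stq_odd[simp]: "odd (stq a)" by (simp add: stq_def)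
lemma enc_ne[simp]: "enc a \<noteq> 2" "enc a \<noteq> 6" "enc a \<noteq> 10" "enc a \<noteq> 3" "enc a \<noteq> 7"
  "2 \<noteq> enc a" "6 \<noteq> enc a" "10 \<noteq> enc a" "3 \<noteq> enc a" "7 \<noteq> enc a"
  by (simp_all add: enc_def) presburger+
lemma stq_ne[simp]: "stq a \<noteq> 2" "stq a \<noteq> 6" "stq a \<noteq> 10" "stq a \<noteq> 3" "stq a \<noteq> 7"
  "2 \<noteq> stq a" "6 \<noteq> stq a" "10 \<noteq> stq a" "3 \<noteq> stq a" "7 \<noteq> stq a" "stq a \<noteq> enc b" "enc b \<noteq> stq a"
  by (simp_all add: stq_def enc_def) presburger+
lemma enc01[simp]: "enc 0 = 0" "enc 1 = 4" "enc a = 0 \<longleftrightarrow> a = 0" "enc a = 4 \<longleftrightarrow> a = 1" by (auto simp: enc_def)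

lemma cf_simps[simp]: "cf []" "cf (x # xs) \<longleftrightarrow> even x \<and> cf xs" "cf (xs @ ys) \<longleftrightarrow> cf xs \<and> cf ys"
  "cf (replicate m x) \<longleftrightarrow> m = 0 \<or> even x"
  by (auto simp: cf_def)

lemma decomp_unique:
  assumes "a @ c # b = a' @ c' # b'" "cf a" "cf b" "odd c" "odd c'"
  shows "a = a' \<and> c = c' \<and> b = b'"
  using assms
proof (induction a arbitrary: a')
  case Nil then show ?case by (cases a') (auto simp: cf_def)
next
  case (Cons x a) then show ?case by (cases a') auto
qed

definition cells :: "(int \<Rightarrow> nat) \<Rightarrow> int \<Rightarrow> int \<Rightarrow> nat list" where
  "cells tp a b = map (\<lambda>i. enc (tp (a + int i))) [0..<nat (b - a)]"

lemma cells_empty[simp]: "b \<le> a \<Longrightarrow> cells tp a b = []"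
  by (simp add: cells_def)

lemma cells_Cons: "a < b \<Longrightarrow> cells tp a b = enc (tp a) # cells tp (a+1) b"
proof -
  assume "a < b"
  then have "nat (b - a) = Suc (nat (b - (a+1)))" by simp
  then show ?thesis unfolding cells_def
    by (simp add: map_upt_Suc algebra_simps del: upt_Suc)
qed

lemma cells_append: "a \<le> m \<Longrightarrow> m \<le> b \<Longrightarrow> cells tp a b = cells tp a m @ cells tp m b"
proof (induction "nat (m - a)" arbitrary: a)
  case 0 then show ?case by simp
next
  case (Suc k)
  then have "a < m" by simp
  moreover have "a < b" using Suc \<open>a < m\<close> by simp
  ultimately have "cells tp a b = enc (tp a) # cells tp (a+1) b" "cells tp a m = enc (tp a) # cells tp (a+1) m"
    by (auto intro: cells_Cons)
  moreover have "cells tp (a+1) b = cells tp (a+1) m @ cells tp m b"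
    using Suc by (intro Suc.hyps) auto
  ultimately show ?case by simp
qed

lemma cells_snoc: "a < b \<Longrightarrow> cells tp a b = cells tp a (b-1) @ [enc (tp (b-1))]"
  using cells_append[of a "b-1" b tp] cells_Cons[of "b-1" b tp] by simp

lemma cells_cong: "(\<And>i. a \<le> i \<Longrightarrow> i < b \<Longrightarrow> tp i = tp' i) \<Longrightarrow> cells tp a b = cells tp' a b"
  unfolding cells_def by (auto intro!: map_cong)

lemma cf_cells[simp]: "cf (cells tp a b)" by (auto simp: cells_def cf_def)

lemma count_cells: "count_list (cells tp a b) 4 = card {i. a \<le> i \<and> i < b \<and> tp i = 1}"
proof (induction "nat (b - a)" arbitrary: a)
  case 0 then have e: "{i. a \<le> i \<and> i < b \<and> tp i = 1} = {}" by auto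
  have "b \<le> a" using 0 by simp
  then show ?case unfolding e cells_empty[OF \<open>b \<le> a\<close>] by simp
next
  case (Suc k)
  then have ab: "a < b" by simp
  have IH: "count_list (cells tp (a+1) b) 4 = card {i. a+1 \<le> i \<and> i < b \<and> tp i = 1}"
    using Suc by (intro Suc.hyps) auto
  have fin: "finite {i. a+1 \<le> i \<and> i < b \<and> tp i = 1}" by (rule finite_subset[of _ "{a+1..<b}"]) auto
  have eq: "{i. a \<le> i \<and> i < b \<and> tp i = 1} = (if tp a = 1 then insert a else id) {i. a+1 \<le> i \<and> i < b \<and> tp i = 1}"
    using ab by (auto simp: order_le_less)
  have nin: "a \<notin> {i. a+1 \<le> i \<and> i < b \<and> tp i = 1}" by auto
  show ?case
  proof (cases "tp a = 1")
    case True
    then show ?thesis using ab IH fin nin by (simp add: cells_Cons eq card_insert_disjoint del: One_nat_def)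
  next
    case False
    then show ?thesis using ab IH fin nin by (simp add: cells_Cons eq del: One_nat_def)
  qed
qed

lemma count_cells_unary: "lo \<le> p \<Longrightarrow> p + int N \<le> hi \<Longrightarrow> count_list (cells (unary_tape p N) lo hi) 4 = N"
proof -
  assume a: "lo \<le> p" "p + int N \<le> hi"
  have "{i. lo \<le> i \<and> i < hi \<and> unary_tape p N i = 1} = {p..<p + int N}"
    using a by (auto simp: unary_tape_def)
  then show ?thesis by (simp add: count_cells)
qed

definition rep :: "nat \<Rightarrow> (int \<Rightarrow> nat) \<Rightarrow> int \<Rightarrow> int \<Rightarrow> int \<Rightarrow> nat list" where
  "rep C tp h lo hi = (2 # cells tp lo h) @ C # (cells tp h hi @ [6])"


locale sim =
  fixes T :: "nat \<Rightarrow> nat" and Q \<Gamma> :: "nat set" and \<delta> :: tm_delta and q0 :: nat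
  assumes halter: "is_halter T Q \<Gamma> \<delta> q0" and Tpos: "\<forall>n\<ge>1. T n \<ge> 1"
begin

lemma valid: "tm_valid Q \<Gamma> \<delta> q0" using halter by (simp add: is_halter_def)
lemma finQ: "finite Q" and fin\<Gamma>: "finite \<Gamma>" and z\<Gamma>: "0 \<in> \<Gamma>" and o\<Gamma>: "1 \<in> \<Gamma>" and q0Q: "q0 \<in> Q"
  using valid by (auto simp: tm_valid_def)
lemma \<delta>D: "\<delta> q a = Some (q', b, d) \<Longrightarrow> q \<in> Q \<and> a \<in> \<Gamma> \<and> q' \<in> Q \<and> b \<in> \<Gamma>"
  using valid unfolding tm_valid_def by blast

definition RRqa :: "nat \<Rightarrow> nat \<Rightarrow> (nat list \<times> nat \<times> nat list \<times> nat list) set" where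
  "RRqa q a = (case \<delta> q a of
      None \<Rightarrow> {([], stq q, [enc a], [3, enc a]), ([], stq q, [enc a], [7, enc a])}
    | Some (q', b, d) \<Rightarrow> (if d then {([], stq q, [enc a], [enc b, stq q'])}
        else insert ([2], stq q, [enc a], [2, enc 0, stq q, enc a])
               ((\<lambda>c. ([enc c], stq q, [enc a], [stq q', enc c, enc b])) ` \<Gamma>)))"

definition RR :: "(nat list \<times> nat \<times> nat list \<times> nat list) set" where
  "RR = (\<Union>q\<in>Q. \<Union>a\<in>\<Gamma>. RRqa q a) \<union> (\<lambda>q. ([], stq q, [6], [stq q, enc 0, 6])) ` Q
      \<union> {([], 3, [enc 0], [enc 0, 3]), ([], 3, [enc 1], [stq q0, enc 1]), ([], 7, [], [7, 10])}"

definition R :: "(nat list \<times> nat list) set" where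
  "R = (\<lambda>(lc, C, rc, t). (lc @ C # rc, t)) ` RR"

lemma RRqa_form: "x \<in> RRqa q a \<Longrightarrow> \<exists>lc t. x = (lc, stq q, [enc a], t) \<and> cf lc"
proof (cases "\<delta> q a")
  case None
  then show "x \<in> RRqa q a \<Longrightarrow> ?thesis" by (auto simp: RRqa_def)
next
  case (Some v)
  then obtain q' b d where v: "\<delta> q a = Some (q', b, d)" by (cases v) auto
  then show "x \<in> RRqa q a \<Longrightarrow> ?thesis" by (cases d) (auto simp: RRqa_def)
qed

lemma RR_cases: "(lc, C, rc, t) \<in> RR \<longleftrightarrow> (\<exists>q\<in>Q. \<exists>a\<in>\<Gamma>. (lc, C, rc, t) \<in> RRqa q a)
   \<or> (\<exists>q\<in>Q. lc = [] \<and> C = stq q \<and> rc = [6] \<and> t = [stq q, enc 0, 6])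
   \<or> (lc = [] \<and> C = 3 \<and> rc = [enc 0] \<and> t = [enc 0, 3])
   \<or> (lc = [] \<and> C = 3 \<and> rc = [enc 1] \<and> t = [stq q0, enc 1])
   \<or> (lc = [] \<and> C = 7 \<and> rc = [] \<and> t = [7, 10])"
  unfolding RR_def by auto

lemma finite_RRqa: "finite (RRqa q a)"
  unfolding RRqa_def using fin\<Gamma> by (auto split: option.splits)

lemma finite_RR: "finite RR"
  unfolding RR_def using finQ fin\<Gamma> finite_RRqa by auto

lemma finite_R: "finite R"
  unfolding R_def using finite_RR by auto

lemma RR_wf: "(lc, C, rc, t) \<in> RR \<Longrightarrow> cf lc \<and> cf rc \<and> odd C"
  unfolding RR_cases by (auto dest!: RRqa_form)

end

context sim begin
lemma step_intro: "(lc, C, rc, t) \<in> RR \<Longrightarrow> v = x @ lc @ C # rc @ y \<Longrightarrow> w = x @ t @ y \<Longrightarrow> (v, w) \<in> mw_step R"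
proof -
  assume a: "(lc, C, rc, t) \<in> RR" "v = x @ lc @ C # rc @ y" "w = x @ t @ y"
  have "(lc @ C # rc, t) \<in> R" unfolding R_def using a by force
  moreover have "v = x @ (lc @ C # rc) @ y" using a by simp
  ultimately show ?thesis unfolding mw_step_def using a(3) by blast
qed

lemma step_ctrl:
  assumes "cf pre" "cf post" "odd C"
  shows "(pre @ C # post, w) \<in> mw_step R \<longleftrightarrow>
     (\<exists>lc rc t x y. (lc, C, rc, t) \<in> RR \<and> pre = x @ lc \<and> post = rc @ y \<and> w = x @ t @ y)"
proof
  assume "(pre @ C # post, w) \<in> mw_step R"
  then obtain x y r t where rt: "(r, t) \<in> R" "pre @ C # post = x @ r @ y" "w = x @ t @ y"
    unfolding mw_step_def by auto
  then obtain lc C' rc where m: "(lc, C', rc, t) \<in> RR" "r = lc @ C' # rc"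
    unfolding R_def by auto
  have "pre @ C # post = (x @ lc) @ C' # (rc @ y)" using rt m by simp
  moreover have "cf lc" "cf rc" "odd C'" using RR_wf[OF m(1)] by auto
  ultimately have "pre = x @ lc \<and> C = C' \<and> post = rc @ y"
    using decomp_unique[of pre C post "x @ lc" C' "rc @ y"] assms by simp
  then show "\<exists>lc rc t x y. (lc, C, rc, t) \<in> RR \<and> pre = x @ lc \<and> post = rc @ y \<and> w = x @ t @ y"
    using m rt by blast
next
  assume "\<exists>lc rc t x y. (lc, C, rc, t) \<in> RR \<and> pre = x @ lc \<and> post = rc @ y \<and> w = x @ t @ y"
  then obtain lc rc t x y where h: "(lc, C, rc, t) \<in> RR" "pre = x @ lc" "post = rc @ y" "w = x @ t @ y"
    by blast
  then show "(pre @ C # post, w) \<in> mw_step R"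
    by (intro step_intro[OF h(1), where x=x and y=y]) simp_all
qed

lemma RR_stq: "(lc, stq q, rc, t) \<in> RR \<longleftrightarrow> q \<in> Q \<and> ((\<exists>a\<in>\<Gamma>. (lc, stq q, rc, t) \<in> RRqa q a)
    \<or> (lc = [] \<and> rc = [6] \<and> t = [stq q, enc 0, 6]))"
proof
  assume "(lc, stq q, rc, t) \<in> RR"
  then consider (a) qa a where "qa \<in> Q" "a \<in> \<Gamma>" "(lc, stq q, rc, t) \<in> RRqa qa a"
    | (b) "q \<in> Q" "lc = [] \<and> rc = [6] \<and> t = [stq q, enc 0, 6]"
    unfolding RR_cases by auto
  then show "q \<in> Q \<and> ((\<exists>a\<in>\<Gamma>. (lc, stq q, rc, t) \<in> RRqa q a) \<or> (lc = [] \<and> rc = [6] \<and> t = [stq q, enc 0, 6]))"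
  proof cases
    case a
    then have "qa = q" using RRqa_form[OF a(3)] by auto
    then show ?thesis using a by auto
  qed auto
qed (auto simp: RR_cases)

lemma RR_3: "(lc, 3, rc, t) \<in> RR \<longleftrightarrow> (lc = [] \<and> ((rc = [enc 0] \<and> t = [enc 0, 3]) \<or> (rc = [enc 1] \<and> t = [stq q0, enc 1])))"
  unfolding RR_cases by (auto dest: RRqa_form)

lemma RR_7: "(lc, 7, rc, t) \<in> RR \<longleftrightarrow> (lc = [] \<and> rc = [] \<and> t = [7, 10])"
  unfolding RR_cases by (auto dest: RRqa_form)

lemma step_stq:
  assumes "cf pre" "cf rest" "q \<in> Q" "a \<in> \<Gamma>"
  shows "(pre @ stq q # enc a # rest, w) \<in> mw_step R \<longleftrightarrow>
    (\<exists>lc t x. (lc, stq q, [enc a], t) \<in> RRqa q a \<and> pre = x @ lc \<and> w = x @ t @ rest)"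
proof -
  have "(pre @ stq q # enc a # rest, w) \<in> mw_step R \<longleftrightarrow>
     (\<exists>lc rc t x y. (lc, stq q, rc, t) \<in> RR \<and> pre = x @ lc \<and> enc a # rest = rc @ y \<and> w = x @ t @ y)"
    using step_ctrl[of pre "enc a # rest" "stq q" w] assms by simp
  also have "\<dots> \<longleftrightarrow> (\<exists>lc t x. (lc, stq q, [enc a], t) \<in> RRqa q a \<and> pre = x @ lc \<and> w = x @ t @ rest)"
  proof
    assume "\<exists>lc rc t x y. (lc, stq q, rc, t) \<in> RR \<and> pre = x @ lc \<and> enc a # rest = rc @ y \<and> w = x @ t @ y"
    then obtain lc rc t x y where h: "(lc, stq q, rc, t) \<in> RR" "pre = x @ lc" "enc a # rest = rc @ y" "w = x @ t @ y"
      by blast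
    from h(1) have "(\<exists>a\<in>\<Gamma>. (lc, stq q, rc, t) \<in> RRqa q a) \<or> (lc = [] \<and> rc = [6] \<and> t = [stq q, enc 0, 6])"
      by (simp add: RR_stq)
    then show "\<exists>lc t x. (lc, stq q, [enc a], t) \<in> RRqa q a \<and> pre = x @ lc \<and> w = x @ t @ rest"
    proof
      assume "\<exists>a\<in>\<Gamma>. (lc, stq q, rc, t) \<in> RRqa q a"
      then obtain a' where a': "(lc, stq q, rc, t) \<in> RRqa q a'" by blast
      have "rc = [enc a']" using RRqa_form[OF a'] by auto
      then have "a' = a" "y = rest" using h(3) by auto
      then have "(lc, stq q, [enc a], t) \<in> RRqa q a" using a' \<open>rc = [enc a']\<close> by simp
      then show ?thesis using h \<open>y = rest\<close> by blast
    next
      assume "lc = [] \<and> rc = [6] \<and> t = [stq q, enc 0, 6]"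
      then show ?thesis using h(3) by simp
    qed
  next
    assume "\<exists>lc t x. (lc, stq q, [enc a], t) \<in> RRqa q a \<and> pre = x @ lc \<and> w = x @ t @ rest"
    then obtain lc t x where h: "(lc, stq q, [enc a], t) \<in> RRqa q a" "pre = x @ lc" "w = x @ t @ rest" by blast
    have "(lc, stq q, [enc a], t) \<in> RR" unfolding RR_stq using h(1) assms by blast
    then show "\<exists>lc rc t x y. (lc, stq q, rc, t) \<in> RR \<and> pre = x @ lc \<and> enc a # rest = rc @ y \<and> w = x @ t @ y"
      using h by fastforce
  qed
  finally show ?thesis .
qed

lemma step_E:
  assumes "cf pre" "q \<in> Q"
  shows "(pre @ stq q # [6], w) \<in> mw_step R \<longleftrightarrow> w = pre @ [stq q, enc 0, 6]"
proof -
  have "(pre @ stq q # [6], w) \<in> mw_step R \<longleftrightarrow>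
     (\<exists>lc rc t x y. (lc, stq q, rc, t) \<in> RR \<and> pre = x @ lc \<and> [6] = rc @ y \<and> w = x @ t @ y)"
    using step_ctrl[of pre "[6]" "stq q" w] assms by simp
  also have "\<dots> \<longleftrightarrow> w = pre @ [stq q, enc 0, 6]"
  proof
    assume "\<exists>lc rc t x y. (lc, stq q, rc, t) \<in> RR \<and> pre = x @ lc \<and> [6] = rc @ y \<and> w = x @ t @ y"
    then obtain lc rc t x y where h: "(lc, stq q, rc, t) \<in> RR" "pre = x @ lc" "[6] = rc @ y" "w = x @ t @ y"
      by blast
    from h(1) have "(\<exists>a\<in>\<Gamma>. (lc, stq q, rc, t) \<in> RRqa q a) \<or> (lc = [] \<and> rc = [6] \<and> t = [stq q, enc 0, 6])"
      by (simp add: RR_stq)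
    then show "w = pre @ [stq q, enc 0, 6]"
    proof
      assume "\<exists>a\<in>\<Gamma>. (lc, stq q, rc, t) \<in> RRqa q a"
      then obtain a' where a': "(lc, stq q, rc, t) \<in> RRqa q a'" by blast
      have "rc = [enc a']" using RRqa_form[OF a'] by auto
      then show ?thesis using h(3) by simp
    next
      assume "lc = [] \<and> rc = [6] \<and> t = [stq q, enc 0, 6]"
      then show ?thesis using h by simp
    qed
  next
    assume "w = pre @ [stq q, enc 0, 6]"
    moreover have "([], stq q, [6], [stq q, enc 0, 6]) \<in> RR" using assms by (auto simp: RR_stq)
    ultimately show "\<exists>lc rc t x y. (lc, stq q, rc, t) \<in> RR \<and> pre = x @ lc \<and> [6] = rc @ y \<and> w = x @ t @ y"
      by fastforce
  qed
  finally show ?thesis .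
qed

lemma step_right:
  assumes "cf pre" "cf rest" "\<delta> q a = Some (q', b, True)"
  shows "(pre @ stq q # enc a # rest, w) \<in> mw_step R \<longleftrightarrow> w = pre @ enc b # stq q' # rest"
  using assms \<delta>D[OF assms(3)] by (subst step_stq) (auto simp: RRqa_def)

lemma step_halt:
  assumes "cf pre" "cf rest" "q \<in> Q" "a \<in> \<Gamma>" "\<delta> q a = None"
  shows "(pre @ stq q # enc a # rest, w) \<in> mw_step R \<longleftrightarrow> w = pre @ 3 # enc a # rest \<or> w = pre @ 7 # enc a # rest"
proof
  assume "(pre @ stq q # enc a # rest, w) \<in> mw_step R"
  then show "w = pre @ 3 # enc a # rest \<or> w = pre @ 7 # enc a # rest"
    using assms by (subst (asm) step_stq) (auto simp: RRqa_def)
next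
  have "([], stq q, [enc a], [3, enc a]) \<in> RR" "([], stq q, [enc a], [7, enc a]) \<in> RR"
    using assms by (auto simp: RR_stq RRqa_def intro!: bexI[of _ a])
  note rr = this
  have "(pre @ stq q # enc a # rest, pre @ 3 # enc a # rest) \<in> mw_step R"
    by (rule step_intro[OF rr(1), where x=pre and y=rest]) simp_all
  moreover have "(pre @ stq q # enc a # rest, pre @ 7 # enc a # rest) \<in> mw_step R"
    by (rule step_intro[OF rr(2), where x=pre and y=rest]) simp_all
  ultimately show "w = pre @ 3 # enc a # rest \<or> w = pre @ 7 # enc a # rest \<Longrightarrow> (pre @ stq q # enc a # rest, w) \<in> mw_step R"
    by blast
qed

lemma step_left:
  assumes "cf pre" "cf rest" "\<delta> q a = Some (q', b, False)" "c \<in> \<Gamma>"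
  shows "(pre @ enc c # stq q # enc a # rest, w) \<in> mw_step R \<longleftrightarrow> w = pre @ stq q' # enc c # enc b # rest"
proof -
  have "(pre @ enc c # stq q # enc a # rest, w) \<in> mw_step R \<longleftrightarrow>
    (\<exists>lc t x. (lc, stq q, [enc a], t) \<in> RRqa q a \<and> pre @ [enc c] = x @ lc \<and> w = x @ t @ rest)"
    using step_stq[of "pre @ [enc c]" rest q a w] assms \<delta>D[OF assms(3)] by simp
  also have "\<dots> \<longleftrightarrow> w = pre @ stq q' # enc c # enc b # rest"
  proof
    assume "\<exists>lc t x. (lc, stq q, [enc a], t) \<in> RRqa q a \<and> pre @ [enc c] = x @ lc \<and> w = x @ t @ rest"
    then show "w = pre @ stq q' # enc c # enc b # rest" using assms by (auto simp: RRqa_def)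
  next
    assume "w = pre @ stq q' # enc c # enc b # rest"
    moreover have "([enc c], stq q, [enc a], [stq q', enc c, enc b]) \<in> RRqa q a" using assms by (auto simp: RRqa_def)
    ultimately show "\<exists>lc t x. (lc, stq q, [enc a], t) \<in> RRqa q a \<and> pre @ [enc c] = x @ lc \<and> w = x @ t @ rest"
      by fastforce
  qed
  finally show ?thesis .
qed

lemma step_leftL:
  assumes "cf rest" "\<delta> q a = Some (q', b, False)"
  shows "([2] @ stq q # enc a # rest, w) \<in> mw_step R \<longleftrightarrow> w = [2, enc 0, stq q, enc a] @ rest"
proof -
  have "([2] @ stq q # enc a # rest, w) \<in> mw_step R \<longleftrightarrow>
    (\<exists>lc t x. (lc, stq q, [enc a], t) \<in> RRqa q a \<and> [2] = x @ lc \<and> w = x @ t @ rest)"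
    using step_stq[of "[2]" rest q a w] assms \<delta>D[OF assms(2)] by simp
  also have "\<dots> \<longleftrightarrow> w = [2, enc 0, stq q, enc a] @ rest"
  proof
    assume "\<exists>lc t x. (lc, stq q, [enc a], t) \<in> RRqa q a \<and> [2] = x @ lc \<and> w = x @ t @ rest"
    then obtain lc t x where h: "(lc, stq q, [enc a], t) \<in> RRqa q a" "[2] = x @ lc" "w = x @ t @ rest" by blast
    from h(1) assms have "(lc = [2] \<and> t = [2, enc 0, stq q, enc a]) \<or> (\<exists>c. lc = [enc c])"
      by (auto simp: RRqa_def)
    then show "w = [2, enc 0, stq q, enc a] @ rest"
    proof
      assume "\<exists>c. lc = [enc c]" then show ?thesis using h(2) by (auto simp: Cons_eq_append_conv)
    qed (use h in \<open>auto simp: Cons_eq_append_conv\<close>)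
  next
    assume "w = [2, enc 0, stq q, enc a] @ rest"
    moreover have "([2], stq q, [enc a], [2, enc 0, stq q, enc a]) \<in> RRqa q a" using assms by (auto simp: RRqa_def)
    ultimately show "\<exists>lc t x. (lc, stq q, [enc a], t) \<in> RRqa q a \<and> [2] = x @ lc \<and> w = x @ t @ rest"
      by fastforce
  qed
  finally show ?thesis .
qed

lemma step_rw0:
  assumes "cf pre" "cf rest"
  shows "(pre @ 3 # enc 0 # rest, w) \<in> mw_step R \<longleftrightarrow> w = pre @ enc 0 # 3 # rest"
proof
  assume "(pre @ 3 # enc 0 # rest, w) \<in> mw_step R"
  then show "w = pre @ enc 0 # 3 # rest"
    using assms by (subst (asm) step_ctrl) (auto simp: RR_3)
next
  have "([], 3, [enc 0], [enc 0, 3]) \<in> RR" by (auto simp: RR_3)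
  note rr = this
  show "w = pre @ enc 0 # 3 # rest \<Longrightarrow> (pre @ 3 # enc 0 # rest, w) \<in> mw_step R"
    by (rule step_intro[OF rr, where x=pre and y=rest]) simp_all
qed

lemma step_rw1:
  assumes "cf pre" "cf rest"
  shows "(pre @ 3 # enc 1 # rest, w) \<in> mw_step R \<longleftrightarrow> w = pre @ stq q0 # enc 1 # rest"
proof
  assume "(pre @ 3 # enc 1 # rest, w) \<in> mw_step R"
  then show "w = pre @ stq q0 # enc 1 # rest"
    using assms by (subst (asm) step_ctrl) (auto simp: RR_3)
next
  have "([], 3, [enc 1], [stq q0, enc 1]) \<in> RR" by (auto simp: RR_3)
  note rr = this
  show "w = pre @ stq q0 # enc 1 # rest \<Longrightarrow> (pre @ 3 # enc 1 # rest, w) \<in> mw_step R"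
    by (rule step_intro[OF rr, where x=pre and y=rest]) simp_all
qed

lemma step_X:
  assumes "cf pre" "cf post"
  shows "(pre @ 7 # post, w) \<in> mw_step R \<longleftrightarrow> w = pre @ 7 # 10 # post"
proof
  assume "(pre @ 7 # post, w) \<in> mw_step R"
  then show "w = pre @ 7 # 10 # post"
    using assms by (subst (asm) step_ctrl) (auto simp: RR_7)
next
  have "([], 7, [], [7, 10]) \<in> RR" by (auto simp: RR_7)
  note rr = this
  show "w = pre @ 7 # 10 # post \<Longrightarrow> (pre @ 7 # post, w) \<in> mw_step R"
    by (rule step_intro[OF rr, where x=pre and y=post]) simp_all
qed

end

context sim begin

lemma rep_split: "h < hi \<Longrightarrow> rep C tp h lo hi = (2 # cells tp lo h) @ C # enc (tp h) # (cells tp (h+1) hi @ [6])"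
  unfolding rep_def by (simp add: cells_Cons)

lemma S1:
  assumes "q \<in> Q" "tp h = 0"
  shows "(rep (stq q) tp h lo h, w) \<in> mw_step R \<longleftrightarrow> w = rep (stq q) tp h lo (h+1)"
proof -
  have "rep (stq q) tp h lo h = (2 # cells tp lo h) @ stq q # [6]" by (simp add: rep_def)
  moreover have "rep (stq q) tp h lo (h+1) = (2 # cells tp lo h) @ [stq q, enc 0, 6]"
    using assms by (simp add: rep_def cells_Cons)
  ultimately show ?thesis using step_E[of "2 # cells tp lo h" q w] assms by simp
qed

lemma S2:
  assumes "h < hi" "\<delta> q (tp h) = Some (q', b, True)" "lo \<le> h"
  shows "(rep (stq q) tp h lo hi, w) \<in> mw_step R \<longleftrightarrow> w = rep (stq q') (tp(h := b)) (h+1) lo hi"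
proof -
  have "rep (stq q') (tp(h := b)) (h+1) lo hi = (2 # cells tp lo h) @ enc b # stq q' # (cells tp (h+1) hi @ [6])"
  proof -
    have "cells (tp(h := b)) lo (h+1) = cells (tp(h := b)) lo h @ [enc b]"
      using cells_snoc[of lo "h+1" "tp(h:=b)"] assms by simp
    also have "cells (tp(h := b)) lo h = cells tp lo h" by (rule cells_cong) auto
    finally have 1: "cells (tp(h := b)) lo (h+1) = cells tp lo h @ [enc b]" .
    have 2: "cells (tp(h := b)) (h+1) hi = cells tp (h+1) hi" by (rule cells_cong) auto
    show ?thesis unfolding rep_def 1 2 by simp
  qed
  then show ?thesis using step_right[of "2 # cells tp lo h" "cells tp (h+1) hi @ [6]" q "tp h" q' b w] assms
    by (simp add: rep_split)
qed

lemma S3: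
  assumes "h < hi" "\<delta> q (tp h) = Some (q', b, False)" "lo < h" "tp (h-1) \<in> \<Gamma>"
  shows "(rep (stq q) tp h lo hi, w) \<in> mw_step R \<longleftrightarrow> w = rep (stq q') (tp(h := b)) (h-1) lo hi"
proof -
  have e1: "rep (stq q) tp h lo hi = (2 # cells tp lo (h-1)) @ enc (tp (h-1)) # stq q # enc (tp h) # (cells tp (h+1) hi @ [6])"
    using assms by (simp add: rep_split cells_snoc[of lo h])
  have "rep (stq q') (tp(h := b)) (h-1) lo hi = (2 # cells tp lo (h-1)) @ stq q' # enc (tp (h-1)) # enc b # (cells tp (h+1) hi @ [6])"
  proof -
    have 1: "cells (tp(h := b)) lo (h-1) = cells tp lo (h-1)" by (rule cells_cong) auto
    have "cells (tp(h := b)) (h-1) hi = enc (tp (h-1)) # enc b # cells (tp(h := b)) (h+1) hi"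
      using assms by (simp add: cells_Cons)
    also have "cells (tp(h := b)) (h+1) hi = cells tp (h+1) hi" by (rule cells_cong) auto
    finally have 2: "cells (tp(h := b)) (h-1) hi = enc (tp (h-1)) # enc b # cells tp (h+1) hi" .
    show ?thesis unfolding rep_def 1 2 by simp
  qed
  then show ?thesis using step_left[of "2 # cells tp lo (h-1)" "cells tp (h+1) hi @ [6]" q "tp h" q' b "tp (h-1)" w] assms e1
    by simp
qed

lemma S4:
  assumes "h < hi" "\<delta> q (tp h) = Some (q', b, False)" "tp (h-1) = 0"
  shows "(rep (stq q) tp h h hi, w) \<in> mw_step R \<longleftrightarrow> w = rep (stq q) tp h (h-1) hi"
proof -
  have "rep (stq q) tp h (h-1) hi = [2, enc 0, stq q, enc (tp h)] @ (cells tp (h+1) hi @ [6])"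
    using assms by (simp add: rep_split cells_Cons)
  then show ?thesis using step_leftL[of "cells tp (h+1) hi @ [6]" q "tp h" q' b w] assms
    by (simp add: rep_split)
qed

lemma S5:
  assumes "h < hi" "q \<in> Q" "tp h \<in> \<Gamma>" "\<delta> q (tp h) = None"
  shows "(rep (stq q) tp h lo hi, w) \<in> mw_step R \<longleftrightarrow> w = rep 3 tp h lo hi \<or> w = rep 7 tp h lo hi"
  using step_halt[of "2 # cells tp lo h" "cells tp (h+1) hi @ [6]" q "tp h" w] assms
  by (simp add: rep_split)

lemma S6:
  assumes "h < hi" "tp h = 0" "lo \<le> h"
  shows "(rep 3 tp h lo hi, w) \<in> mw_step R \<longleftrightarrow> w = rep 3 tp (h+1) lo hi"
proof -
  have "rep 3 tp (h+1) lo hi = (2 # cells tp lo h) @ enc 0 # 3 # (cells tp (h+1) hi @ [6])"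
    using assms by (simp add: rep_def cells_snoc[of lo "h+1"] )
  then show ?thesis using step_rw0[of "2 # cells tp lo h" "cells tp (h+1) hi @ [6]" w] assms
    by (simp add: rep_split)
qed

lemma S7:
  assumes "h < hi" "tp h = 1"
  shows "(rep 3 tp h lo hi, w) \<in> mw_step R \<longleftrightarrow> w = rep (stq q0) tp h lo hi"
  using step_rw1[of "2 # cells tp lo h" "cells tp (h+1) hi @ [6]" w] assms
  by (simp add: rep_split)

end

definition shc :: "int \<Rightarrow> tm_config \<Rightarrow> tm_config" where
  "shc d c = (case c of (q, tp, h) \<Rightarrow> (q, \<lambda>i. tp (i - d), h + d))"

lemma tm_step_shc: "tm_step \<delta> (shc d c) = map_option (shc d) (tm_step \<delta> c)"
proof -
  obtain q tp h where c: "c = (q, tp, h)" by (cases c) auto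
  show ?thesis
  proof (cases "\<delta> q (tp h)")
    case None then show ?thesis by (simp add: c shc_def tm_step_def)
  next
    case (Some v)
    then obtain q' b dd where v: "\<delta> q (tp h) = Some (q', b, dd)" by (cases v) auto
    have "(\<lambda>i. tp (i - d))(h + d := b) = (\<lambda>i. (tp(h := b)) (i - d))" by (auto simp: fun_eq_iff)
    then show ?thesis using v by (simp add: c shc_def tm_step_def)
  qed
qed

lemma tm_run_shc: "tm_run \<delta> (shc d c) j = map_option (shc d) (tm_run \<delta> c j)"
proof (induction j)
  case 0 then show ?case by simp
next
  case (Suc j)
  then show ?case by (cases "tm_run \<delta> c j") (simp_all add: tm_step_shc)
qed

lemma unary_shift: "unary_tape d n = (\<lambda>i. unary_tape 0 n (i - d))"
  by (auto simp: unary_tape_def fun_eq_iff)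

lemma tm_run_prefix: "tm_run \<delta> c m \<noteq> None \<Longrightarrow> j \<le> m \<Longrightarrow> tm_run \<delta> c j \<noteq> None"
proof (induction m)
  case 0 then show ?case by simp
next
  case (Suc m)
  have "tm_run \<delta> c m \<noteq> None" using Suc.prems(1) by (cases "tm_run \<delta> c m") auto
  then show ?case using Suc by (metis le_SucE)
qed

context sim begin

definition run :: "nat \<Rightarrow> int \<Rightarrow> nat \<Rightarrow> tm_config option" where
  "run n d j = tm_run \<delta> (q0, unary_tape d n, d) j"

lemma run_inv: "run n d j = Some (q, tp, h) \<Longrightarrow> q \<in> Q \<and> (\<forall>i. tp i \<in> \<Gamma>)"
proof (induction j arbitrary: q tp h)
  case 0 then show ?case using q0Q z\<Gamma> o\<Gamma> by (auto simp: run_def unary_tape_def)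
next
  case (Suc j)
  then obtain c where c: "run n d j = Some c" "tm_step \<delta> c = Some (q, tp, h)"
    by (cases "run n d j") (auto simp: run_def)
  obtain q1 tp1 h1 where c1: "c = (q1, tp1, h1)" by (cases c) auto
  have IH: "q1 \<in> Q \<and> (\<forall>i. tp1 i \<in> \<Gamma>)" using Suc.IH c c1 by blast
  from c(2) obtain q' b dd where "\<delta> q1 (tp1 h1) = Some (q', b, dd)" "q = q'" "tp = tp1(h1 := b)"
    by (auto simp: c1 tm_step_def split: option.splits)
  then show ?case using IH \<delta>D by auto
qed

lemma run_halt:
  assumes "n \<ge> 1"
  shows "\<exists>q tp h p. run n d (T n) = Some (q, tp, h) \<and> tm_step \<delta> (q, tp, h) = None \<and> tp = unary_tape p (Suc n) \<and> h \<le> p"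
proof -
  obtain q tp h p where H: "tm_run \<delta> (q0, unary_tape 0 n, 0) (T n) = Some (q, tp, h)"
     "tm_step \<delta> (q, tp, h) = None" "tp = unary_tape p (Suc n)" "h \<le> p"
    using halter assms unfolding is_halter_def by blast
  have "shc d (q0, unary_tape 0 n, 0) = (q0, unary_tape d n, d)"
    by (simp add: shc_def unary_shift[of d n])
  then have "run n d (T n) = Some (shc d (q, tp, h))"
    using tm_run_shc[where d=d and c="(q0, unary_tape 0 n, 0)" and j="T n"] H(1) by (simp add: run_def)
  moreover have "shc d (q, tp, h) = (q, unary_tape (p + d) (Suc n), h + d)"
    using H(3) by (simp add: shc_def unary_tape_def fun_eq_iff)
  moreover have "tm_step \<delta> (q, unary_tape (p + d) (Suc n), h + d) = None"
    using tm_step_shc[where d=d and c="(q, tp, h)"] H(2) \<open>shc d (q, tp, h) = _\<close> by simp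
  ultimately show ?thesis using H(4) by fastforce
qed

lemma run_step:
  assumes "n \<ge> 1" "j < T n" "run n d j = Some (q, tp, h)"
  shows "\<exists>q' b dd. \<delta> q (tp h) = Some (q', b, dd) \<and> run n d (Suc j) = Some (q', tp(h := b), if dd then h + 1 else h - 1)"
proof -
  obtain c where "run n d (T n) = Some c" using run_halt[OF assms(1), of d] by blast
  then have "run n d (Suc j) \<noteq> None" using tm_run_prefix[where m="T n" and j="Suc j" and c="(q0, unary_tape d n, d)" and \<delta>=\<delta>] assms(2) unfolding run_def
    by (metis Suc_leI option.distinct(1))
  then obtain c' where "tm_step \<delta> (q, tp, h) = Some c'" "run n d (Suc j) = Some c'"
    using assms(3) by (auto simp: run_def)
  then show ?thesis by (auto simp: tm_step_def split: option.splits) blast+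
qed

lemma run_halted:
  assumes "n \<ge> 1" "run n d (T n) = Some (q, tp, h)"
  shows "\<delta> q (tp h) = None \<and> (\<exists>p. tp = unary_tape p (Suc n) \<and> h \<le> p)"
  using run_halt[OF assms(1), of d] assms(2) by (auto simp: tm_step_def split: option.splits)

end

definition W :: "(int \<Rightarrow> nat) \<Rightarrow> int \<Rightarrow> int \<Rightarrow> int \<Rightarrow> bool" where
  "W tp lo h hi \<longleftrightarrow> lo \<le> h \<and> h \<le> hi \<and> (\<forall>i. tp i \<noteq> 0 \<longrightarrow> lo \<le> i \<and> i < hi)"

context sim begin

definition PA :: "nat \<Rightarrow> nat \<Rightarrow> nat list \<Rightarrow> bool" where
  "PA n j v \<longleftrightarrow> 1 \<le> n \<and> j \<le> T n \<and>
     (\<exists>d q tp h lo hi. run n d j = Some (q, tp, h) \<and> W tp lo h hi \<and> v = rep (stq q) tp h lo hi)"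

definition PB :: "nat \<Rightarrow> nat list \<Rightarrow> bool" where
  "PB n v \<longleftrightarrow> 1 \<le> n \<and> (\<exists>p h lo hi. lo \<le> h \<and> h \<le> p \<and> p + int n + 1 \<le> hi \<and> v = rep 3 (unary_tape p (Suc n)) h lo hi)"

lemma W_nz: "W tp lo h hi \<Longrightarrow> tp i \<noteq> 0 \<Longrightarrow> lo \<le> i \<and> i < hi"
  unfolding W_def by blast

lemma W_ext_hi: assumes "W tp lo h hi" shows "W tp lo h (hi+1)"
proof -
  have "lo \<le> i \<and> i < hi + 1" if "tp i \<noteq> 0" for i using W_nz[OF assms that] by simp
  then show ?thesis using assms unfolding W_def by simp
qed

lemma W_ext_lo: assumes "W tp lo h hi" shows "W tp (lo-1) h hi"
proof -
  have "lo - 1 \<le> i \<and> i < hi" if "tp i \<noteq> 0" for i using W_nz[OF assms that] by simp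
  then show ?thesis using assms unfolding W_def by simp
qed

lemma W_upd_right: assumes "W tp lo h hi" "h < hi" shows "W (tp(h := b)) lo (h+1) hi"
proof -
  have "lo \<le> i \<and> i < hi" if "(tp(h := b)) i \<noteq> 0" for i
  proof (cases "i = h")
    case True then show ?thesis using assms unfolding W_def by simp
  next
    case False then show ?thesis using W_nz[OF assms(1), of i] that by simp
  qed
  then show ?thesis using assms unfolding W_def by simp
qed

lemma W_upd_left: assumes "W tp lo h hi" "h < hi" "lo < h" shows "W (tp(h := b)) lo (h-1) hi"
proof -
  have "lo \<le> i \<and> i < hi" if "(tp(h := b)) i \<noteq> 0" for i
  proof (cases "i = h")
    case True then show ?thesis using assms unfolding W_def by simp
  next
    case False then show ?thesis using W_nz[OF assms(1), of i] that by simp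
  qed
  then show ?thesis using assms unfolding W_def by simp
qed

lemma A_step:
  assumes r: "run n d j = Some (q, tp, h)" and w: "W tp lo h hi" and n: "1 \<le> n" and j: "j < T n"
  shows "\<exists>v'. (\<forall>w. (rep (stq q) tp h lo hi, w) \<in> mw_step R \<longleftrightarrow> w = v') \<and>
     ((h = hi \<and> v' = rep (stq q) tp h lo (hi+1) \<and> W tp lo h (hi+1)) \<or>
      (h < hi \<and> h = lo \<and> v' = rep (stq q) tp h (lo-1) hi \<and> W tp (lo-1) h hi) \<or>
      PA n (Suc j) v')"
proof -
  have inv: "q \<in> Q" "\<And>i. tp i \<in> \<Gamma>" using run_inv[OF r] by auto
  obtain q' b dd where st: "\<delta> q (tp h) = Some (q', b, dd)"
    and r': "run n d (Suc j) = Some (q', tp(h := b), if dd then h + 1 else h - 1)"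
    using run_step[OF n j r] by blast
  have W': "lo \<le> h" "h \<le> hi" using w by (auto simp: W_def)
  show ?thesis
  proof (cases "h = hi")
    case True
    have "tp h = 0" using W_nz[OF w, of h] True by fastforce
    then have s: "\<forall>w. (rep (stq q) tp h lo hi, w) \<in> mw_step R \<longleftrightarrow> w = rep (stq q) tp h lo (hi+1)"
      using S1[OF inv(1)] True by simp
    show ?thesis
      by (rule exI[of _ "rep (stq q) tp h lo (hi+1)"]) (use s True W_ext_hi[OF w] in simp)
  next
    case False
    then have hh: "h < hi" using W' by simp
    show ?thesis
    proof (cases dd)
      case True
      have s: "\<forall>w. (rep (stq q) tp h lo hi, w) \<in> mw_step R \<longleftrightarrow> w = rep (stq q') (tp(h := b)) (h+1) lo hi"
        using S2[OF hh _ W'(1)] st True by simp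
      have "PA n (Suc j) (rep (stq q') (tp(h := b)) (h+1) lo hi)"
        unfolding PA_def using n j r' True W_upd_right[OF w hh]
        by (intro conjI exI[of _ d] exI[of _ q'] exI[of _ "tp(h:=b)"] exI[of _ "h+1"] exI[of _ lo] exI[of _ hi]) simp_all
      then show ?thesis
        by (intro exI[of _ "rep (stq q') (tp(h := b)) (h+1) lo hi"]) (use s in simp)
    next
      case dF: False
      show ?thesis
      proof (cases "h = lo")
        case True
        have "tp (h-1) = 0" using W_nz[OF w, of "h-1"] True by fastforce
        then have s: "\<forall>w. (rep (stq q) tp h lo hi, w) \<in> mw_step R \<longleftrightarrow> w = rep (stq q) tp h (lo-1) hi"
          using S4[OF hh] st dF True by simp
        show ?thesis
          by (rule exI[of _ "rep (stq q) tp h (lo-1) hi"]) (use s True hh W_ext_lo[OF w] in simp)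
      next
        case False
        then have lh: "lo < h" using W' by simp
        have s: "\<forall>w. (rep (stq q) tp h lo hi, w) \<in> mw_step R \<longleftrightarrow> w = rep (stq q') (tp(h := b)) (h-1) lo hi"
          using S3[OF hh _ lh inv(2)] st dF by simp
        have "PA n (Suc j) (rep (stq q') (tp(h := b)) (h-1) lo hi)"
          unfolding PA_def using n j r' dF W_upd_left[OF w hh lh]
          by (intro conjI exI[of _ d] exI[of _ q'] exI[of _ "tp(h:=b)"] exI[of _ "h-1"] exI[of _ lo] exI[of _ hi]) simp_all
        then show ?thesis
          by (intro exI[of _ "rep (stq q') (tp(h := b)) (h-1) lo hi"]) (use s in simp)
      qed
    qed
  qed
qed

lemma A_next:
  assumes "PA n j v" "j < T n"
  shows "\<exists>v'. (\<forall>w. (v, w) \<in> mw_step R \<longleftrightarrow> w = v') \<and> (PA n j v' \<or> PA n (Suc j) v')"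
proof -
  obtain d q tp h lo hi where r: "run n d j = Some (q, tp, h)" "W tp lo h hi" "v = rep (stq q) tp h lo hi" "1 \<le> n" "j \<le> T n"
    using assms(1) unfolding PA_def by blast
  obtain v' where s: "\<forall>w. (rep (stq q) tp h lo hi, w) \<in> mw_step R \<longleftrightarrow> w = v'" and
    c: "(h = hi \<and> v' = rep (stq q) tp h lo (hi+1) \<and> W tp lo h (hi+1)) \<or>
      (h < hi \<and> h = lo \<and> v' = rep (stq q) tp h (lo-1) hi \<and> W tp (lo-1) h hi) \<or>
      PA n (Suc j) v'"
    using A_step[OF r(1) r(2) r(4) assms(2)] by blast
  from c have "PA n j v' \<or> PA n (Suc j) v'"
  proof (elim disjE)
    assume c1: "h = hi \<and> v' = rep (stq q) tp h lo (hi+1) \<and> W tp lo h (hi+1)"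
    show ?thesis unfolding PA_def using r(1,4,5) c1
      by (intro disjI1 conjI exI[of _ d] exI[of _ q] exI[of _ tp] exI[of _ h] exI[of _ lo] exI[of _ "hi+1"]) auto
  next
    assume c1: "h < hi \<and> h = lo \<and> v' = rep (stq q) tp h (lo-1) hi \<and> W tp (lo-1) h hi"
    show ?thesis unfolding PA_def using r(1,4,5) c1
      by (intro disjI1 conjI exI[of _ d] exI[of _ q] exI[of _ tp] exI[of _ h] exI[of _ "lo-1"] exI[of _ hi]) auto
  qed simp
  then show ?thesis using s r(3) by blast
qed

lemma A_adv:
  assumes "PA n j v" "j < T n"
  shows "\<exists>v'. (v, v') \<in> (mw_step R)\<^sup>* \<and> PA n (Suc j) v'"
proof -
  obtain d q tp h lo hi where r: "run n d j = Some (q, tp, h)" "W tp lo h hi" "v = rep (stq q) tp h lo hi" "1 \<le> n"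
    using assms(1) unfolding PA_def by blast
  have core: "\<exists>v'. (rep (stq q) tp h lo' hi', v') \<in> (mw_step R)\<^sup>* \<and> PA n (Suc j) v'"
    if "W tp lo' h hi'" "h < hi'" "h \<noteq> lo'" for lo' hi'
    using A_step[OF r(1) that(1) r(4) assms(2)] that by auto
  have core2: "\<exists>v'. (rep (stq q) tp h lo' hi', v') \<in> (mw_step R)\<^sup>* \<and> PA n (Suc j) v'"
    if w1: "W tp lo' h hi'" and h1: "h < hi'" for lo' hi'
  proof (cases "h = lo'")
    case True
    obtain v1 where s1: "\<forall>w. (rep (stq q) tp h lo' hi', w) \<in> mw_step R \<longleftrightarrow> w = v1" and
      c1: "(h = hi' \<and> v1 = rep (stq q) tp h lo' (hi'+1) \<and> W tp lo' h (hi'+1)) \<or>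
      (h < hi' \<and> h = lo' \<and> v1 = rep (stq q) tp h (lo'-1) hi' \<and> W tp (lo'-1) h hi') \<or>
      PA n (Suc j) v1"
      using A_step[OF r(1) w1 r(4) assms(2)] by blast
    from c1 show ?thesis
    proof (elim disjE)
      assume "h = hi' \<and> v1 = rep (stq q) tp h lo' (hi'+1) \<and> W tp lo' h (hi'+1)"
      then show ?thesis using h1 by simp
    next
      assume c2: "h < hi' \<and> h = lo' \<and> v1 = rep (stq q) tp h (lo'-1) hi' \<and> W tp (lo'-1) h hi'"
      obtain v' where "(v1, v') \<in> (mw_step R)\<^sup>*" "PA n (Suc j) v'"
        using core[of "lo'-1" hi'] c2 h1 True by auto
      moreover have "(rep (stq q) tp h lo' hi', v1) \<in> mw_step R" using s1[rule_format, of v1] by simp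
      ultimately show ?thesis by (meson converse_rtrancl_into_rtrancl)
    next
      assume "PA n (Suc j) v1"
      moreover have "(rep (stq q) tp h lo' hi', v1) \<in> mw_step R" using s1[rule_format, of v1] by simp
      ultimately show ?thesis by (intro exI[of _ v1]) auto
    qed
  next
    case False
    then show ?thesis using core[OF w1 h1] by simp
  qed
  show ?thesis
  proof (cases "h < hi")
    case True then show ?thesis using core2[OF r(2)] r(3) by simp
  next
    case False
    then have "h = hi" using r(2) by (auto simp: W_def)
    obtain v1 where s1: "\<forall>w. (rep (stq q) tp h lo hi, w) \<in> mw_step R \<longleftrightarrow> w = v1" and
      c1: "(h = hi \<and> v1 = rep (stq q) tp h lo (hi+1) \<and> W tp lo h (hi+1)) \<or>
      (h < hi \<and> h = lo \<and> v1 = rep (stq q) tp h (lo-1) hi \<and> W tp (lo-1) h hi) \<or>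
      PA n (Suc j) v1"
      using A_step[OF r(1) r(2) r(4) assms(2)] by blast
    from c1 show ?thesis
    proof (elim disjE)
      assume c2: "h = hi \<and> v1 = rep (stq q) tp h lo (hi+1) \<and> W tp lo h (hi+1)"
      obtain v' where "(v1, v') \<in> (mw_step R)\<^sup>*" "PA n (Suc j) v'"
        using core2[of lo "hi+1"] c2 by auto
      moreover have "(rep (stq q) tp h lo hi, v1) \<in> mw_step R" using s1[rule_format, of v1] by simp
      ultimately show ?thesis using r(3) by (meson converse_rtrancl_into_rtrancl)
    next
      assume "h < hi \<and> h = lo \<and> v1 = rep (stq q) tp h (lo-1) hi \<and> W tp (lo-1) h hi"
      then show ?thesis using False by simp
    next
      assume "PA n (Suc j) v1"
      moreover have "(rep (stq q) tp h lo hi, v1) \<in> mw_step R" using s1[rule_format, of v1] by simp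
      ultimately show ?thesis using r(3) by (intro exI[of _ v1]) auto
    qed
  qed
qed

lemma A_halt:
  assumes "PA n (T n) v"
  shows "\<exists>v1 x y. (\<forall>w. (v, w) \<in> mw_step R \<longleftrightarrow> w = v1 \<or> w = x @ 7 # y) \<and> PB n v1 \<and> cf x \<and> cf y
      \<and> count_list (x @ y) 4 = Suc n"
proof -
  obtain d q tp h lo hi where r: "run n d (T n) = Some (q, tp, h)" "W tp lo h hi" "v = rep (stq q) tp h lo hi" "1 \<le> n"
    using assms(1) unfolding PA_def by blast
  have inv: "q \<in> Q" "\<And>i. tp i \<in> \<Gamma>" using run_inv[OF r(1)] by auto
  obtain p where hp: "\<delta> q (tp h) = None" "tp = unary_tape p (Suc n)" "h \<le> p"
    using run_halted[OF r(4) r(1)] by blast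
  have "tp p \<noteq> 0" "tp (p + int n) \<noteq> 0" using hp(2) by (auto simp: unary_tape_def)
  then have lp: "lo \<le> p" "p + int n < hi" using r(2) unfolding W_def by blast+
  have hh: "h < hi" using lp hp(3) by simp
  have lh: "lo \<le> h" using r(2) by (simp add: W_def)
  have s: "\<forall>w. (v, w) \<in> mw_step R \<longleftrightarrow> w = rep 3 tp h lo hi \<or> w = rep 7 tp h lo hi"
    using S5[where tp=tp and h=h and q=q and lo=lo, OF hh inv(1) inv(2)[of h] hp(1)] r(3) by simp
  have pb: "PB n (rep 3 tp h lo hi)" unfolding PB_def using r(4) lh hp lp
    by (intro conjI exI[of _ p] exI[of _ h] exI[of _ lo] exI[of _ hi]) auto
  have e7: "rep 7 tp h lo hi = (2 # cells tp lo h) @ 7 # (cells tp h hi @ [6])" by (simp add: rep_def)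
  have cnt: "count_list ((2 # cells tp lo h) @ (cells tp h hi @ [6])) 4 = Suc n"
  proof -
    have "count_list ((2 # cells tp lo h) @ (cells tp h hi @ [6])) 4 = count_list (cells tp lo h @ cells tp h hi) 4"
      by simp
    also have "cells tp lo h @ cells tp h hi = cells tp lo hi" using lh hh cells_append[of lo h hi tp] by simp
    also have "count_list (cells tp lo hi) 4 = Suc n" using hp(2) lp by (simp add: count_cells_unary)
    finally show ?thesis .
  qed
  have s': "\<forall>w. (v, w) \<in> mw_step R \<longleftrightarrow> w = rep 3 tp h lo hi \<or> w = (2 # cells tp lo h) @ 7 # (cells tp h hi @ [6])"
    using s unfolding e7 .
  have "cf (2 # cells tp lo h)" "cf (cells tp h hi @ [6])" by simp_all
  then show ?thesis using s' pb cnt by blast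
qed

lemma B_step:
  assumes "lo \<le> h" "h \<le> p" "p + int n + 1 \<le> hi" "1 \<le> n"
  shows "\<exists>v'. (\<forall>w. (rep 3 (unary_tape p (Suc n)) h lo hi, w) \<in> mw_step R \<longleftrightarrow> w = v') \<and>
     ((h < p \<and> v' = rep 3 (unary_tape p (Suc n)) (h+1) lo hi) \<or> (h = p \<and> PA (Suc n) 0 v'))"
proof (cases "h < p")
  case True
  then have "unary_tape p (Suc n) h = 0" by (simp add: unary_tape_def)
  then show ?thesis using S6[of h hi "unary_tape p (Suc n)" lo] assms True by auto
next
  case False
  then have hp: "h = p" using assms by simp
  then have "unary_tape p (Suc n) h = 1" by (simp add: unary_tape_def)
  then have "\<forall>w. (rep 3 (unary_tape p (Suc n)) h lo hi, w) \<in> mw_step R \<longleftrightarrow> w = rep (stq q0) (unary_tape p (Suc n)) h lo hi"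
    using S7[of h hi "unary_tape p (Suc n)" lo] assms by auto
  moreover have "PA (Suc n) 0 (rep (stq q0) (unary_tape p (Suc n)) h lo hi)"
    unfolding PA_def W_def run_def using hp assms
    by (intro conjI exI[of _ p] exI[of _ q0] exI[of _ "unary_tape p (Suc n)"] exI[of _ p] exI[of _ lo] exI[of _ hi])
       (auto simp: unary_tape_def)
  ultimately show ?thesis using hp by blast
qed

lemma B_next:
  assumes "PB n v"
  shows "\<exists>v'. (\<forall>w. (v, w) \<in> mw_step R \<longleftrightarrow> w = v') \<and> (PB n v' \<or> PA (Suc n) 0 v')"
proof -
  obtain p h lo hi where r: "lo \<le> h" "h \<le> p" "p + int n + 1 \<le> hi" "v = rep 3 (unary_tape p (Suc n)) h lo hi" "1 \<le> n"
    using assms unfolding PB_def by blast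
  obtain v' where s: "\<forall>w. (rep 3 (unary_tape p (Suc n)) h lo hi, w) \<in> mw_step R \<longleftrightarrow> w = v'"
    and c: "(h < p \<and> v' = rep 3 (unary_tape p (Suc n)) (h+1) lo hi) \<or> (h = p \<and> PA (Suc n) 0 v')"
    using B_step[OF r(1-3) r(5)] by blast
  from c have "PB n v' \<or> PA (Suc n) 0 v'"
  proof (elim disjE)
    assume c1: "h < p \<and> v' = rep 3 (unary_tape p (Suc n)) (h+1) lo hi"
    show ?thesis unfolding PB_def using r c1
      by (intro disjI1 conjI exI[of _ p] exI[of _ "h+1"] exI[of _ lo] exI[of _ hi]) auto
  qed simp
  then show ?thesis using s r(4) by blast
qed

lemma B_adv:
  assumes "PB n v"
  shows "\<exists>v'. (v, v') \<in> (mw_step R)\<^sup>* \<and> PA (Suc n) 0 v'"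
proof -
  obtain p h lo hi where r: "lo \<le> h" "h \<le> p" "p + int n + 1 \<le> hi" "v = rep 3 (unary_tape p (Suc n)) h lo hi" "1 \<le> n"
    using assms unfolding PB_def by blast
  have "\<exists>v'. (rep 3 (unary_tape p (Suc n)) h lo hi, v') \<in> (mw_step R)\<^sup>* \<and> PA (Suc n) 0 v'"
    if "lo \<le> h" "h \<le> p" "nat (p - h) = k" for h k
    using that
  proof (induction k arbitrary: h)
    case 0
    then have "h = p" by simp
    then show ?case using B_step[OF 0(1,2) r(3,5)] by auto
  next
    case (Suc k)
    then have "h < p" by simp
    then obtain v1 where "(rep 3 (unary_tape p (Suc n)) h lo hi, v1) \<in> mw_step R" "v1 = rep 3 (unary_tape p (Suc n)) (h+1) lo hi"
      using B_step[OF Suc.prems(1,2) r(3,5)] by auto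
    moreover have "\<exists>v'. (v1, v') \<in> (mw_step R)\<^sup>* \<and> PA (Suc n) 0 v'"
      using Suc.IH[of "h+1"] Suc.prems \<open>h < p\<close> \<open>v1 = _\<close> by simp
    ultimately show ?case by (meson converse_rtrancl_into_rtrancl)
  qed
  then show ?thesis using r by simp
qed

end

context sim begin

definition s0 :: "nat list" where "s0 = rep (stq q0) (unary_tape 0 1) 0 0 1"

lemma s0_eq: "s0 = [2, stq q0, 4, 6]"
  by (simp add: s0_def rep_def cells_Cons unary_tape_def)

lemma PA_s0: "PA 1 0 s0"
  unfolding PA_def s0_def W_def run_def
  by (intro conjI exI[of _ 0] exI[of _ q0] exI[of _ "unary_tape 0 1"] exI[of _ 0] exI[of _ 0] exI[of _ 1])
     (auto simp: unary_tape_def)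

definition S :: "nat \<Rightarrow> nat" where "S c = (\<Sum>i=1..c. T i)"

lemma S_Suc: "S (Suc c) = S c + T (Suc c)" by (simp add: S_def)

definition Inv :: "nat list \<Rightarrow> nat \<Rightarrow> nat \<Rightarrow> bool" where
  "Inv v k c \<longleftrightarrow> (\<exists>n j. PA n j v \<and> c = n - 1 \<and> S (n-1) + j \<le> k) \<or> (\<exists>n. PB n v \<and> c = n \<and> S n \<le> k)"

definition isBr :: "nat list \<Rightarrow> bool" where "isBr w \<longleftrightarrow> (\<exists>x y. cf x \<and> cf y \<and> w = x @ 7 # y)"

definition brnext :: "nat list \<Rightarrow> nat list" where
  "brnext w = takeWhile even w @ 7 # 10 # tl (dropWhile even w)"

lemma br_succ:
  assumes "isBr w"
  shows "(\<forall>w'. (w, w') \<in> mw_step R \<longleftrightarrow> w' = brnext w) \<and> isBr (brnext w)"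
proof -
  obtain x y where xy: "cf x" "cf y" "w = x @ 7 # y" using assms unfolding isBr_def by blast
  have ev: "\<And>z. z \<in> set x \<Longrightarrow> even z" using xy(1) by (simp add: cf_def)
  have "brnext w = x @ 7 # 10 # y"
    unfolding brnext_def xy(3) using takeWhile_append2[of x even "7 # y"] dropWhile_append2[of x even "7 # y"] ev
    by simp
  moreover have "\<forall>w'. (w, w') \<in> mw_step R \<longleftrightarrow> w' = x @ 7 # 10 # y" using step_X[OF xy(1,2)] xy(3) by simp
  moreover have "isBr (x @ 7 # 10 # y)" unfolding isBr_def using xy by (intro exI[of _ x] exI[of _ "10 # y"]) simp
  ultimately show ?thesis by simp
qed

lemma Inv_S: "Inv v k c \<Longrightarrow> S c \<le> k"
  unfolding Inv_def by auto

lemma Inv_next: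
  assumes "Inv v k c"
  shows "\<exists>v' c' B'. Inv v' (Suc k) c' \<and> finite B' \<and> card B' \<le> c' - c \<and> (\<forall>w\<in>B'. isBr w) \<and> c \<le> c'
     \<and> {w. (v, w) \<in> mw_step R} \<subseteq> insert v' B'"
proof -
  from assms consider (a) n j where "PA n j v" "c = n - 1" "S (n - 1) + j \<le> k"
    | (b) n where "PB n v" "c = n" "S n \<le> k"
    unfolding Inv_def by blast
  then show ?thesis
  proof cases
  case a
  note pa = a(1) and c = a(2) and sk = a(3)
  have n1: "1 \<le> n" "j \<le> T n" using pa unfolding PA_def by auto
  show ?thesis
  proof (cases "j < T n")
    case True
    obtain v' where s: "\<forall>w. (v, w) \<in> mw_step R \<longleftrightarrow> w = v'" and p: "PA n j v' \<or> PA n (Suc j) v'"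
      using A_next[OF pa True] by blast
    have "Inv v' (Suc k) c" using p
    proof
      assume "PA n j v'" then show ?thesis unfolding Inv_def using c sk by (intro disjI1 exI[of _ n] exI[of _ j]) simp
    next
      assume "PA n (Suc j) v'" then show ?thesis unfolding Inv_def using c sk by (intro disjI1 exI[of _ n] exI[of _ "Suc j"]) simp
    qed
    then show ?thesis using s by (intro exI[of _ v'] exI[of _ c] exI[of _ "{}"]) auto
  next
    case False
    then have jT: "j = T n" using n1 by simp
    obtain v1 x y where s: "\<forall>w. (v, w) \<in> mw_step R \<longleftrightarrow> w = v1 \<or> w = x @ 7 # y" and pb: "PB n v1"
      and xy: "cf x" "cf y"
      using A_halt[of n v] pa jT by blast
    have "S n = S (n-1) + T n" using n1 S_Suc[of "n-1"] by simp
    then have "Inv v1 (Suc k) n" unfolding Inv_def using pb sk jT by (intro disjI2 exI[of _ n]) simp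
    moreover have "isBr (x @ 7 # y)" unfolding isBr_def using xy by blast
    ultimately show ?thesis using s c n1
      by (intro exI[of _ v1] exI[of _ n] exI[of _ "{x @ 7 # y}"]) auto
  qed
next
  case b
  note pb = b(1) and c = b(2) and sk = b(3)
  obtain v' where s: "\<forall>w. (v, w) \<in> mw_step R \<longleftrightarrow> w = v'" and p: "PB n v' \<or> PA (Suc n) 0 v'"
    using B_next[OF pb] by blast
  have "Inv v' (Suc k) c" using p
  proof
    assume "PB n v'" then show ?thesis unfolding Inv_def using c sk by (intro disjI2 exI[of _ n]) simp
  next
    assume "PA (Suc n) 0 v'" then show ?thesis unfolding Inv_def using c sk by (intro disjI1 exI[of _ "Suc n"] exI[of _ 0]) simp
  qed
  then show ?thesis using s by (intro exI[of _ v'] exI[of _ c] exI[of _ "{}"]) auto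
  qed
qed

lemma reach_bound:
  "\<exists>v c B. Inv v k c \<and> finite B \<and> card B \<le> c \<and> (\<forall>w\<in>B. isBr w) \<and> {w. (s0, w) \<in> mw_step R ^^ k} \<subseteq> insert v B"
proof (induction k)
  case 0
  have "Inv s0 0 0" unfolding Inv_def using PA_s0 by (auto simp: S_def)
  then show ?case by (intro exI[of _ s0] exI[of _ 0] exI[of _ "{}"]) auto
next
  case (Suc k)
  then obtain v c B where h: "Inv v k c" "finite B" "card B \<le> c" "\<forall>w\<in>B. isBr w"
    "{w. (s0, w) \<in> mw_step R ^^ k} \<subseteq> insert v B" by blast
  obtain v' c' B' where h': "Inv v' (Suc k) c'" "finite B'" "card B' \<le> c' - c" "\<forall>w\<in>B'. isBr w" "c \<le> c'"
     "{w. (v, w) \<in> mw_step R} \<subseteq> insert v' B'"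
    using Inv_next[OF h(1)] by blast
  define B2 where "B2 = B' \<union> brnext ` B"
  have "finite B2" using h h' by (simp add: B2_def)
  moreover have "card B2 \<le> c'"
  proof -
    have "card B2 \<le> card B' + card (brnext ` B)" unfolding B2_def by (rule card_Un_le)
    also have "card (brnext ` B) \<le> card B" using h(2) by (rule card_image_le)
    finally show ?thesis using h(3) h'(3,5) by linarith
  qed
  moreover have "\<forall>w\<in>B2. isBr w" using h(4) h'(4) br_succ by (auto simp: B2_def)
  moreover have "{w. (s0, w) \<in> mw_step R ^^ Suc k} \<subseteq> insert v' B2"
  proof
    fix w assume "w \<in> {w. (s0, w) \<in> mw_step R ^^ Suc k}"
    then obtain u where u: "(s0, u) \<in> mw_step R ^^ k" "(u, w) \<in> mw_step R" by (auto elim: relpow_Suc_E)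
    then have "u \<in> insert v B" using h(5) by blast
    then show "w \<in> insert v' B2"
    proof
      assume "u = v" then show ?thesis using u(2) h'(6) by (auto simp: B2_def)
    next
      assume "u \<in> B" then have "w = brnext u" using br_succ h(4) u(2) by blast
      then show ?thesis using \<open>u \<in> B\<close> by (auto simp: B2_def)
    qed
  qed
  ultimately show ?case using h'(1) by blast
qed

lemma layer_bound: "finite (mw_layer R s0 k) \<and> (\<exists>c. card (mw_layer R s0 k) \<le> Suc c \<and> S c \<le> k)"
proof -
  obtain v c B where h: "Inv v k c" "finite B" "card B \<le> c" "{w. (s0, w) \<in> mw_step R ^^ k} \<subseteq> insert v B"
    using reach_bound by blast
  have sub: "mw_layer R s0 k \<subseteq> insert v B" using h(4) unfolding mw_layer_def by blast
  have "card (mw_layer R s0 k) \<le> card (insert v B)" using sub h(2) by (intro card_mono) auto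
  also have "\<dots> \<le> Suc c" using h(2,3) by (simp add: card_insert_if)
  finally show ?thesis using Inv_S[OF h(1)] sub h(2) finite_subset by blast
qed

end

lemma count_replicate: "count_list (replicate m a) b = (if a = b then m else 0)"
  by (induction m) auto

context sim begin

lemma PA_iter: "PA n 0 v \<Longrightarrow> j \<le> T n \<Longrightarrow> \<exists>v'. (v, v') \<in> (mw_step R)\<^sup>* \<and> PA n j v'"
proof (induction j)
  case 0 then show ?case by blast
next
  case (Suc j)
  then obtain v1 where "(v, v1) \<in> (mw_step R)\<^sup>*" "PA n j v1" by auto
  moreover obtain v2 where "(v1, v2) \<in> (mw_step R)\<^sup>*" "PA n (Suc j) v2"
    using A_adv[OF \<open>PA n j v1\<close>] Suc.prems by auto
  ultimately show ?case by (meson rtrancl_trans)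
qed

lemma reach_PA: "1 \<le> n \<Longrightarrow> \<exists>v. (s0, v) \<in> (mw_step R)\<^sup>* \<and> PA n 0 v"
proof (induction n rule: nat_induct_at_least)
  case base then show ?case using PA_s0 by blast
next
  case (Suc n)
  then obtain v where v: "(s0, v) \<in> (mw_step R)\<^sup>*" "PA n 0 v" by blast
  obtain v' where v': "(v, v') \<in> (mw_step R)\<^sup>*" "PA n (T n) v'" using PA_iter[OF v(2)] by blast
  obtain v1 x y where s: "\<forall>w. (v', w) \<in> mw_step R \<longleftrightarrow> w = v1 \<or> w = x @ 7 # y" and pb: "PB n v1"
    using A_halt[OF v'(2)] by blast
  obtain v2 where v2: "(v1, v2) \<in> (mw_step R)\<^sup>*" "PA (Suc n) 0 v2" using B_adv[OF pb] by blast
  have "(v', v1) \<in> mw_step R" using s by blast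
  then have "(s0, v2) \<in> (mw_step R)\<^sup>*" using v(1) v'(1) v2(1)
    by (meson converse_rtrancl_into_rtrancl rtrancl_trans)
  then show ?case using v2(2) by blast
qed

lemma reach_br: "1 \<le> n \<Longrightarrow> \<exists>x y. cf x \<and> cf y \<and> count_list (x @ y) 4 = Suc n \<and> (s0, x @ 7 # y) \<in> (mw_step R)\<^sup>*"
proof -
  assume n: "1 \<le> n"
  obtain v where v: "(s0, v) \<in> (mw_step R)\<^sup>*" "PA n 0 v" using reach_PA[OF n] by blast
  obtain v' where v': "(v, v') \<in> (mw_step R)\<^sup>*" "PA n (T n) v'" using PA_iter[OF v(2)] by blast
  obtain v1 x y where s: "\<forall>w. (v', w) \<in> mw_step R \<longleftrightarrow> w = v1 \<or> w = x @ 7 # y"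
    and xy: "cf x" "cf y" "count_list (x @ y) 4 = Suc n"
    using A_halt[OF v'(2)] by blast
  have "(v', x @ 7 # y) \<in> mw_step R" using s by blast
  then have "(s0, x @ 7 # y) \<in> (mw_step R)\<^sup>*" using v(1) v'(1) by (meson rtrancl.rtrancl_into_rtrancl rtrancl_trans)
  then show ?thesis using xy by blast
qed

lemma RRqa_t10: "(lc, C, rc, t) \<in> RRqa q a \<Longrightarrow> count_list t 10 = 0"
proof (cases "\<delta> q a")
  case None
  then show "(lc, C, rc, t) \<in> RRqa q a \<Longrightarrow> ?thesis" by (auto simp: RRqa_def)
next
  case (Some v)
  then obtain q' b d where v: "\<delta> q a = Some (q', b, d)" by (cases v) auto
  then show "(lc, C, rc, t) \<in> RRqa q a \<Longrightarrow> ?thesis" by (cases d) (auto simp: RRqa_def)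
qed

lemma RR_t10: "(lc, C, rc, t) \<in> RR \<Longrightarrow> count_list t 10 \<le> 1"
  unfolding RR_cases by (auto dest: RRqa_t10)

lemma step_c10: "(u, w) \<in> mw_step R \<Longrightarrow> count_list w 10 \<le> Suc (count_list u 10)"
proof -
  assume "(u, w) \<in> mw_step R"
  then obtain x y r t where h: "(r, t) \<in> R" "u = x @ r @ y" "w = x @ t @ y" unfolding mw_step_def by blast
  then obtain lc C rc where "(lc, C, rc, t) \<in> RR" unfolding R_def by auto
  then have "count_list t 10 \<le> 1" by (rule RR_t10)
  then show ?thesis using h by simp
qed

lemma pow_c10: "(s0, w) \<in> mw_step R ^^ k \<Longrightarrow> count_list w 10 \<le> k"
proof (induction k arbitrary: w)
  case 0 then have "w = [2, stq q0, 4, 6]" by (simp add: s0_eq)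
  then show ?case by simp
next
  case (Suc k)
  then obtain u where "(s0, u) \<in> mw_step R ^^ k" "(u, w) \<in> mw_step R" by (auto elim: relpow_Suc_E)
  then show ?case using Suc.IH step_c10 by fastforce
qed

definition D :: "nat list \<Rightarrow> nat" where "D w = (LEAST k. (s0, w) \<in> mw_step R ^^ k)"

lemma D_le: "(s0, w) \<in> mw_step R ^^ k \<Longrightarrow> D w \<le> k"
  unfolding D_def by (rule Least_le)

lemma D_layer: "(s0, w) \<in> (mw_step R)\<^sup>* \<Longrightarrow> (s0, w) \<in> mw_step R ^^ D w \<and> w \<in> mw_layer R s0 (D w)"
proof -
  assume "(s0, w) \<in> (mw_step R)\<^sup>*"
  then obtain k where "(s0, w) \<in> mw_step R ^^ k" using rtrancl_power by blast
  then have 1: "(s0, w) \<in> mw_step R ^^ D w" unfolding D_def by (rule LeastI)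
  have "\<forall>j<D w. (s0, w) \<notin> mw_step R ^^ j" using D_le by fastforce
  then show ?thesis using 1 unfolding mw_layer_def by blast
qed

lemma branch_layers:
  assumes "1 \<le> n"
  shows "\<exists>K f. \<forall>k\<ge>K. f k \<in> mw_layer R s0 k \<and> count_list (f k) 4 = Suc n"
proof -
  obtain x y where xy: "cf x" "cf y" "count_list (x @ y) 4 = Suc n" "(s0, x @ 7 # y) \<in> (mw_step R)\<^sup>*"
    using reach_br[OF assms] by blast
  define bX where "bX m = x @ 7 # replicate m 10 @ y" for m
  have stepX: "(bX m, bX (Suc m)) \<in> mw_step R" for m
    using step_X[of x "replicate m 10 @ y" "bX (Suc m)"] xy unfolding bX_def by simp
  have reach: "(s0, bX m) \<in> (mw_step R)\<^sup>*" for m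
  proof (induction m)
    case 0 then show ?case using xy(4) by (simp add: bX_def)
  next
    case (Suc m) then show ?case using stepX by (meson rtrancl.rtrancl_into_rtrancl)
  qed
  have Dge: "m \<le> D (bX m)" for m
  proof -
    have "count_list (bX m) 10 \<le> D (bX m)" using pow_c10 D_layer[OF reach[of m]] by blast
    moreover have "m \<le> count_list (bX m) 10" by (simp add: bX_def count_replicate)
    ultimately show ?thesis by simp
  qed
  have Dsuc: "D (bX (Suc m)) \<le> Suc (D (bX m))" for m
  proof -
    have "(s0, bX (Suc m)) \<in> mw_step R ^^ Suc (D (bX m))"
      using D_layer[OF reach[of m]] stepX[of m] by (auto intro: relpow_Suc_I)
    then show ?thesis by (rule D_le)
  qed
  define g where "g m = D (bX m) - m" for m
  have gdec: "g (Suc m) \<le> g m" for m using Dsuc[of m] Dge[of m] Dge[of "Suc m"] unfolding g_def by linarith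
  define c0 where "c0 = (LEAST c. \<exists>m. g m = c)"
  have "\<exists>m. g m = c0" unfolding c0_def by (rule LeastI_ex) blast
  then obtain M where M: "g M = c0" by blast
  have gconst: "g m = c0" if "M \<le> m" for m
  proof -
    have "g m \<le> g M" using lift_Suc_antimono_le[of g, OF gdec that] .
    moreover have "c0 \<le> g m" unfolding c0_def by (rule Least_le) blast
    ultimately show ?thesis using M by simp
  qed
  have "\<forall>k\<ge>M + c0. bX (k - c0) \<in> mw_layer R s0 k \<and> count_list (bX (k - c0)) 4 = Suc n"
  proof (intro allI impI conjI)
    fix k assume k: "M + c0 \<le> k"
    have "g (k - c0) = c0" using gconst k by simp
    then have "D (bX (k - c0)) = k" using Dge[of "k - c0"] k unfolding g_def by linarith
    then show "bX (k - c0) \<in> mw_layer R s0 k" using D_layer[OF reach[of "k - c0"]] by simp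
    show "count_list (bX (k - c0)) 4 = Suc n" using xy(3) by (simp add: bX_def count_replicate)
  qed
  then show ?thesis by (intro exI[of _ "M + c0"] exI[of _ "\<lambda>k. bX (k - c0)"]) simp
qed

lemma layer_down:
  assumes "w \<in> mw_layer R s0 d" "j \<le> d"
  shows "\<exists>u. u \<in> mw_layer R s0 j"
proof -
  have w: "(s0, w) \<in> mw_step R ^^ (j + (d - j))" "\<forall>i<d. (s0, w) \<notin> mw_step R ^^ i"
    using assms unfolding mw_layer_def by auto
  then obtain u where u: "(s0, u) \<in> mw_step R ^^ j" "(u, w) \<in> mw_step R ^^ (d - j)"
    unfolding relpow_add by blast
  have "(s0, u) \<notin> mw_step R ^^ i" if "i < j" for i
  proof
    assume "(s0, u) \<in> mw_step R ^^ i"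
    then have "(s0, w) \<in> mw_step R ^^ (i + (d - j))" using u(2) unfolding relpow_add by blast
    moreover have "i + (d - j) < d" using that assms(2) by simp
    ultimately show False using w(2) by blast
  qed
  then show ?thesis using u(1) unfolding mw_layer_def by blast
qed

lemma layer_nonempty: "mw_layer R s0 k \<noteq> {}"
proof -
  obtain K f where Kf: "\<forall>k\<ge>K. f k \<in> mw_layer R s0 k" using branch_layers[of 1] by auto
  have "f (max k K) \<in> mw_layer R s0 (max k K)" using Kf by simp
  then show ?thesis using layer_down[of "f (max k K)" "max k K" k] by auto
qed

lemma layer_big: "\<exists>k. N \<le> card (mw_layer R s0 k)"
proof -
  have "\<forall>n. \<exists>Kf. 1 \<le> n \<longrightarrow> (\<forall>k\<ge>fst Kf. snd Kf k \<in> mw_layer R s0 k \<and> count_list (snd Kf k) 4 = Suc n)"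
    using branch_layers by fastforce
  then obtain F where F: "\<And>n k. 1 \<le> n \<Longrightarrow> fst (F n) \<le> k \<Longrightarrow> snd (F n) k \<in> mw_layer R s0 k \<and> count_list (snd (F n) k) 4 = Suc n"
    by (metis choice)
  define K where "K = (\<Sum>n\<in>{1..N}. fst (F n))"
  have Kge: "fst (F n) \<le> K" if "n \<in> {1..N}" for n unfolding K_def using that by (intro member_le_sum) auto
  define A where "A = (\<lambda>n. snd (F n) K) ` {1..N}"
  have sub: "A \<subseteq> mw_layer R s0 K" unfolding A_def using F Kge by auto
  have inj: "inj_on (\<lambda>n. snd (F n) K) {1..N}"
  proof (rule inj_onI)
    fix a b assume ab: "a \<in> {1..N}" "b \<in> {1..N}" "snd (F a) K = snd (F b) K"
    then have "Suc a = Suc b" using F[of a K] F[of b K] Kge by (metis atLeastAtMost_iff)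
    then show "a = b" by simp
  qed
  have "N = card A" unfolding A_def using card_image[OF inj] by simp
  also have "\<dots> \<le> card (mw_layer R s0 K)" using sub layer_bound[of K] by (intro card_mono) auto
  finally show ?thesis by blast
qed

lemma unbounded: "mw_unbounded R s0"
proof -
  have nf: "\<not> mw_finite R s0"
  proof
    assume "mw_finite R s0"
    then obtain n where "1 \<le> n" "mw_growth R s0 n = 0" unfolding mw_finite_def by blast
    then have "card (mw_layer R s0 (n - 1)) = 0" unfolding mw_growth_def by simp
    then show False using layer_bound[of "n-1"] layer_nonempty[of "n-1"] by simp
  qed
  have nb: "\<not> mw_bounded R s0"
  proof
    assume "mw_bounded R s0"
    then obtain B where B: "\<forall>n\<ge>1. mw_growth R s0 n \<le> B" unfolding mw_bounded_def by blast
    obtain k where "Suc B \<le> card (mw_layer R s0 k)" using layer_big by blast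
    moreover have "mw_growth R s0 (Suc k) \<le> B" using B by simp
    ultimately show False unfolding mw_growth_def by simp
  qed
  show ?thesis using nf nb unfolding mw_unbounded_def by simp
qed

end

lemma enumerate_ge: "enumerate {n::nat. m \<le> n} i = m + i"
proof (induction i arbitrary: m)
  case 0 then show ?case by (simp add: enumerate_0 Least_equality)
next
  case (Suc i)
  have l: "(LEAST n. n \<in> {n::nat. m \<le> n}) = m" by (rule Least_equality) auto
  have e: "{n::nat. m \<le> n} - {m} = {n. Suc m \<le> n}" by auto
  have "enumerate {n::nat. m \<le> n} (Suc i) = enumerate ({n::nat. m \<le> n} - {m}) i"
    unfolding enumerate_Suc l ..
  then show ?case unfolding e using Suc[of "Suc m"] by simp
qed

lemma enumerate_pos: "enumerate pos_nat i = Suc i"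
  using enumerate_ge[of 1 i] by (simp add: pos_nat_def)

definition V :: "(nat \<Rightarrow> nat) \<Rightarrow> nat \<Rightarrow> real" where "V h i = (if i = 0 then 0 else real (h i))"

lemma floor_nat: assumes "0 \<le> x" shows "real (nat \<lfloor>x\<rfloor>) \<le> x" "x < real (nat \<lfloor>x\<rfloor>) + 1"
  using assms of_nat_floor[OF assms] by linarith+

lemma Lchain_eq:
  assumes "0 \<le> x"
  shows "Lchain pos_nat h x = V h (nat \<lfloor>x\<rfloor>) + (V h (Suc (nat \<lfloor>x\<rfloor>)) - V h (nat \<lfloor>x\<rfloor>)) * (x - real (nat \<lfloor>x\<rfloor>))"
proof -
  have q: "(if i = 0 then 0 else real (enumerate pos_nat (i - 1))) = real i" for i
    by (cases i) (auto simp: enumerate_pos)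
  have v: "(if i = 0 then 0 else real (h (enumerate pos_nat (i - 1)))) = V h i" for i
    by (cases i) (auto simp: enumerate_pos V_def)
  have L: "(LEAST i. x < real (Suc i)) = nat \<lfloor>x\<rfloor>"
  proof (rule Least_equality)
    have "real (Suc (nat \<lfloor>x\<rfloor>)) = real (nat \<lfloor>x\<rfloor>) + 1" by (simp only: of_nat_Suc)
    then show "x < real (Suc (nat \<lfloor>x\<rfloor>))" using floor_nat(2)[OF assms] by linarith
    fix y assume "x < real (Suc y)"
    then show "nat \<lfloor>x\<rfloor> \<le> y" using assms by linarith
  qed
  show ?thesis unfolding Lchain_def Let_def q v L by simp
qed

lemma Lchain_on:
  assumes "real i \<le> x" "x \<le> real i + 1"
  shows "Lchain pos_nat h x = V h i + (V h (Suc i) - V h i) * (x - real i)"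
proof (cases "x = real i + 1")
  case True
  then have "nat \<lfloor>x\<rfloor> = Suc i" by simp
  then show ?thesis using Lchain_eq[of x h] True by simp
next
  case False
  then have "nat \<lfloor>x\<rfloor> = i" using assms by linarith
  then show ?thesis using Lchain_eq[of x h] assms by simp
qed

lemma Lchain_cont: "continuous_on {0..} (Lchain pos_nat h)"
proof -
  have seg: "continuous_on {real i..real i + 1} (Lchain pos_nat h)" for i
  proof -
    have "continuous_on {real i..real i + 1} (\<lambda>x. V h i + (V h (Suc i) - V h i) * (x - real i))"
      by (intro continuous_intros)
    moreover have "continuous_on {real i..real i + 1} (\<lambda>x. V h i + (V h (Suc i) - V h i) * (x - real i))
        = continuous_on {real i..real i + 1} (Lchain pos_nat h)"
      by (rule continuous_on_cong) (auto simp: Lchain_on)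
    ultimately show ?thesis by simp
  qed
  have upto: "continuous_on {0..real N} (Lchain pos_nat h)" for N
  proof (induction N)
    case 0
    have "{0..real 0} = {real 0..real 0}" by simp
    then show ?case using continuous_on_subset[OF seg[of 0]] by auto
  next
    case (Suc N)
    have "{0..real (Suc N)} = {0..real N} \<union> {real N..real N + 1}" by auto
    then show ?case using continuous_on_closed_Un[OF _ _ Suc seg[of N]] by simp
  qed
  show ?thesis unfolding continuous_on_eq_continuous_within
  proof
    fix x :: real assume x: "x \<in> {0..}"
    define N where "N = nat \<lceil>x\<rceil> + 1"
    have xN: "x < real N" unfolding N_def by linarith
    have "continuous (at x within {0..real N}) (Lchain pos_nat h)"
      using upto[of N] x xN unfolding continuous_on_eq_continuous_within by auto
    moreover have "at x within {0..} = at x within {0..real N}"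
      by (rule at_within_nhd[of _ "{..<real N}"]) (use xN in auto)
    ultimately show "continuous (at x within {0..}) (Lchain pos_nat h)" by simp
  qed
qed

lemma Lchain_nonneg: "0 \<le> x \<Longrightarrow> 0 \<le> Lchain pos_nat h x"
proof -
  assume x: "0 \<le> x"
  define i where "i = nat \<lfloor>x\<rfloor>"
  define t where "t = x - real i"
  have t: "0 \<le> t" "t \<le> 1" using floor_nat[OF x] unfolding t_def i_def by linarith+
  have "0 \<le> V h i" "0 \<le> V h (Suc i)" by (auto simp: V_def)
  then have "0 \<le> (1 - t) * V h i + t * V h (Suc i)" using t by simp
  also have "(1 - t) * V h i + t * V h (Suc i) = Lchain pos_nat h x"
    using Lchain_eq[OF x, of h] unfolding i_def[symmetric] t_def[symmetric] by (simp add: algebra_simps)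
  finally show ?thesis .
qed

lemma Lchain_le:
  assumes x: "0 \<le> x" and b: "V h (nat \<lfloor>x\<rfloor>) \<le> B" "V h (Suc (nat \<lfloor>x\<rfloor>)) \<le> B"
  shows "Lchain pos_nat h x \<le> B"
proof -
  define i where "i = nat \<lfloor>x\<rfloor>"
  define t where "t = x - real i"
  have t: "0 \<le> t" "t \<le> 1" using floor_nat[OF x] unfolding t_def i_def by linarith+
  have "(1 - t) * V h i + t * V h (Suc i) \<le> (1 - t) * B + t * B"
    using t b unfolding i_def[symmetric] by (intro add_mono mult_left_mono) auto
  also have "(1 - t) * V h i + t * V h (Suc i) = Lchain pos_nat h x"
    using Lchain_eq[OF x, of h] unfolding i_def[symmetric] t_def[symmetric] by (simp add: algebra_simps)
  finally show ?thesis by (simp add: algebra_simps)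
qed

locale tpos =
  fixes T :: "nat \<Rightarrow> nat"
  assumes Tpos: "\<forall>n\<ge>1. T n \<ge> 1"
begin

definition Sn :: "nat \<Rightarrow> nat" where "Sn c = (\<Sum>i=1..c. T i)"

lemma Sn_Suc: "Sn (Suc c) = Sn c + T (Suc c)" by (simp add: Sn_def)
lemma V_Sn: "V Sn i = real (Sn i)" by (simp add: V_def Sn_def)
lemma Sn_ge: "c \<le> Sn c"
proof (induction c)
  case (Suc c)
  have "1 \<le> T (Suc c)" using Tpos by simp
  then show ?case using Suc Sn_Suc[of c] by simp
qed simp
lemma Sn_mono: "a \<le> b \<Longrightarrow> Sn a \<le> Sn b"
  unfolding Sn_def by (intro sum_mono2) auto

lemma Tstar_eq: "0 \<le> x \<Longrightarrow> Tstar T x = real (Sn (nat \<lfloor>x\<rfloor>)) + real (T (Suc (nat \<lfloor>x\<rfloor>))) * (x - real (nat \<lfloor>x\<rfloor>))"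
  unfolding Tstar_def Sn_def[symmetric] using Lchain_eq[of x Sn] by (simp add: V_Sn Sn_Suc)

lemma Tstar_nat: "Tstar T (real c) = real (Sn c)"
  using Tstar_eq[of "real c"] by simp

lemma Tstar_cont: "continuous_on {0..} (Tstar T)"
  unfolding Tstar_def by (rule Lchain_cont)

lemma Tstar_ge: "0 \<le> x \<Longrightarrow> x \<le> Tstar T x"
proof -
  assume x: "0 \<le> x"
  define i where "i = nat \<lfloor>x\<rfloor>"
  have t: "0 \<le> x - real i" using floor_nat[OF x] unfolding i_def by linarith
  have "real i \<le> real (Sn i)" using Sn_ge[of i] by simp
  moreover have "x - real i \<le> real (T (Suc i)) * (x - real i)"
  proof -
    have "1 \<le> real (T (Suc i))" using Tpos by simp
    from mult_right_mono[OF this t] show ?thesis by simp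
  qed
  ultimately show ?thesis using Tstar_eq[OF x] unfolding i_def[symmetric] by linarith
qed

lemma Tstar_strict: assumes "0 \<le> x" "x < y" shows "Tstar T x < Tstar T y"
proof -
  define i where "i = nat \<lfloor>x\<rfloor>"
  define k where "k = nat \<lfloor>y\<rfloor>"
  have y: "0 \<le> y" using assms by simp
  have fx: "real i \<le> x" "x < real i + 1" using floor_nat[OF assms(1)] unfolding i_def by linarith+
  have fy: "real k \<le> y" "y < real k + 1" using floor_nat[OF y] unfolding k_def by linarith+
  have T1: "1 \<le> T (Suc i)" using Tpos by simp
  have ex: "Tstar T x = real (Sn i) + real (T (Suc i)) * (x - real i)" using Tstar_eq[OF assms(1)] unfolding i_def .
  have ey: "Tstar T y = real (Sn k) + real (T (Suc k)) * (y - real k)" using Tstar_eq[OF y] unfolding k_def .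
  have ik: "i \<le> k" using assms unfolding i_def k_def by (simp add: floor_mono nat_mono)
  show ?thesis
  proof (cases "i = k")
    case True
    have "real (T (Suc i)) * (x - real i) < real (T (Suc i)) * (y - real i)"
      using T1 assms(2) by (intro mult_strict_left_mono) auto
    then show ?thesis using ex ey True by simp
  next
    case False
    then have "Suc i \<le> k" using ik by simp
    have "real (T (Suc i)) * (x - real i) < real (T (Suc i))"
    proof -
      have "x - real i < 1" using fx by simp
      moreover have "0 < real (T (Suc i))" using T1 by simp
      ultimately have "real (T (Suc i)) * (x - real i) < real (T (Suc i)) * 1" by (rule mult_strict_left_mono)
      then show ?thesis by simp
    qed
    then have "Tstar T x < real (Sn (Suc i))" using ex Sn_Suc[of i] by simp
    also have "real (Sn (Suc i)) \<le> real (Sn k)" using Sn_mono[OF \<open>Suc i \<le> k\<close>] by simp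
    also have "real (Sn k) \<le> Tstar T y" using ey fy by simp
    finally show ?thesis .
  qed
qed

lemma Tstar_inv_prop: assumes "0 \<le> y" shows "0 \<le> Tstar_inv T y \<and> Tstar T (Tstar_inv T y) = y"
proof -
  have "\<exists>x\<ge>0. x \<le> y \<and> Tstar T x = y"
  proof (rule IVT')
    show "Tstar T 0 \<le> y" using Tstar_nat[of 0] assms by (simp add: Sn_def)
    show "y \<le> Tstar T y" using Tstar_ge[OF assms] .
    show "0 \<le> y" by fact
    show "continuous_on {0..y} (Tstar T)" using continuous_on_subset[OF Tstar_cont] by auto
  qed
  then obtain x where x: "0 \<le> x" "Tstar T x = y" by blast
  have uniq: "z = x" if "0 \<le> z" "Tstar T z = y" for z
  proof (rule ccontr)
    assume "z \<noteq> x"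
    then have "z < x \<or> x < z" by auto
    then show False
    proof
      assume "z < x" then have "Tstar T z < Tstar T x" using Tstar_strict that(1) by blast
      then show False using that(2) x(2) by simp
    next
      assume "x < z" then have "Tstar T x < Tstar T z" using Tstar_strict x(1) by blast
      then show False using that(2) x(2) by simp
    qed
  qed
  have "Tstar_inv T y = x" unfolding Tstar_inv_def
    by (rule the_equality) (use x in simp, use uniq in blast)
  then show ?thesis using x by simp
qed

lemma Tstar_inv_ge: assumes "0 \<le> y" "real (Sn c) \<le> y" shows "real c \<le> Tstar_inv T y"
proof (rule ccontr)
  assume "\<not> real c \<le> Tstar_inv T y"
  then have "Tstar T (Tstar_inv T y) < Tstar T (real c)" using Tstar_strict[of "Tstar_inv T y" "real c"] Tstar_inv_prop[OF assms(1)] by linarith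
  then show False using Tstar_inv_prop[OF assms(1)] Tstar_nat[of c] assms(2) by simp
qed

lemma chain_bigo:
  assumes h: "\<And>n. 1 \<le> n \<Longrightarrow> \<exists>c. h n \<le> Suc c \<and> Sn c \<le> n - 1"
  shows "Lchain pos_nat h \<in> O(Tstar_inv T)"
proof (rule bigoI[where c = 2])
  have bnd: "V h i \<le> 1 + Tstar_inv T x" if "0 \<le> x" "real i \<le> x + 1" for i x
  proof (cases "i = 0")
    case True then show ?thesis using Tstar_inv_prop[OF that(1)] by (simp add: V_def)
  next
    case False
    then have "1 \<le> i" by simp
    then obtain c where c: "h i \<le> Suc c" "Sn c \<le> i - 1" using h by blast
    have "real (Sn c) \<le> x" using c(2) that False by linarith
    then have "real c \<le> Tstar_inv T x" using Tstar_inv_ge that(1) by blast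
    then show ?thesis using c(1) False by (simp add: V_def)
  qed
  show "\<forall>\<^sub>F x in at_top. norm (Lchain pos_nat h x) \<le> 2 * norm (Tstar_inv T x)"
    using eventually_ge_at_top[of "real (T 1)"]
  proof eventually_elim
    case (elim x)
    have x: "0 \<le> x" using elim by (meson of_nat_0_le_iff order_trans)
    have "real (Sn 1) \<le> x" using elim by (simp add: Sn_def)
    then have t1: "1 \<le> Tstar_inv T x" using Tstar_inv_ge[OF x, of 1] by simp
    have "Lchain pos_nat h x \<le> 1 + Tstar_inv T x"
      using floor_nat[OF x] by (intro Lchain_le x bnd) auto
    then show ?case using Lchain_nonneg[OF x, of h] t1 by simp
  qed
qed

end

lemma env_bound:
  fixes g :: "nat \<Rightarrow> nat" and P :: "nat \<Rightarrow> nat \<Rightarrow> bool"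
  assumes hb: "\<And>n. 1 \<le> n \<Longrightarrow> \<exists>c. g n \<le> Suc c \<and> P c (n - 1)"
    and P0: "\<And>m. P 0 m" and Pm: "\<And>c m m'. P c m \<Longrightarrow> m \<le> m' \<Longrightarrow> P c m'"
  shows "\<And>n. 1 \<le> n \<Longrightarrow> \<exists>c. upper_env g n \<le> Suc c \<and> P c (n - 1)"
    and "\<And>n. 1 \<le> n \<Longrightarrow> \<exists>c. lower_env g n \<le> Suc c \<and> P c (n - 1)"
proof -
  fix n :: nat assume n: "1 \<le> n"
  have eqA: "{g k | k. 1 \<le> k \<and> k \<le> n} = g ` {1..n}" by auto
  have "upper_env g n \<in> g ` {1..n}" unfolding upper_env_def eqA using n by (intro Max_in) auto
  then obtain k where k: "1 \<le> k" "k \<le> n" "upper_env g n = g k" by auto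
  then obtain c where "g k \<le> Suc c" "P c (k - 1)" using hb by blast
  then show "\<exists>c. upper_env g n \<le> Suc c \<and> P c (n - 1)" using k Pm[of c "k-1" "n-1"] by auto
next
  fix n :: nat assume n: "1 \<le> n"
  define B where "B = {g k | k. 1 \<le> k \<and> k \<le> n \<and> (\<forall>l\<ge>k. g l \<ge> g k)}"
  have fin: "finite B" unfolding B_def by (rule finite_subset[of _ "g ` {1..n}"]) auto
  have "lower_env g n \<in> B \<union> {1}" unfolding lower_env_def B_def[symmetric] using fin by (intro Max_in) auto
  then show "\<exists>c. lower_env g n \<le> Suc c \<and> P c (n - 1)"
  proof
    assume "lower_env g n \<in> B"
    then obtain k where k: "1 \<le> k" "k \<le> n" "lower_env g n = g k" unfolding B_def by auto
    then obtain c where "g k \<le> Suc c" "P c (k - 1)" using hb by blast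
    then show ?thesis using k Pm[of c "k-1" "n-1"] by auto
  next
    assume "lower_env g n \<in> {1}"
    then show ?thesis using P0 by auto
  qed
qed

theorem theorem1:
  fixes T :: "nat \<Rightarrow> nat"
  assumes "\<forall>n\<ge>1. T n \<ge> 1"
    and "(\<lambda>n. real (T n)) \<in> \<Omega>(\<lambda>n. real n)"
    and "\<exists>Q \<Gamma> \<delta> q0. is_halter T Q \<Gamma> \<delta> q0"
  shows "\<exists>R s \<Sigma>. mw_valid R s \<Sigma> \<and> mw_unbounded R s \<and>
           (\<exists>a b. tight_bounds (mw_growth R s) a b \<and>
                  a \<in> O(Tstar_inv T) \<and> b \<in> O(Tstar_inv T))"
proof -
  obtain Q \<Gamma> \<delta> q0 where hal: "is_halter T Q \<Gamma> \<delta> q0" using assms(3) by blast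
  interpret sim T Q \<Gamma> \<delta> q0 using hal assms(1) by unfold_locales
  interpret tpos T using assms(1) by unfold_locales
  define g where "g = mw_growth R s0"
  have hb: "\<exists>c. g n \<le> Suc c \<and> Sn c \<le> n - 1" if "1 \<le> n" for n
  proof -
    obtain c where "card (mw_layer R s0 (n - 1)) \<le> Suc c" "S c \<le> n - 1" using layer_bound[of "n - 1"] by blast
    moreover have "S c = Sn c" by (simp add: S_def Sn_def)
    ultimately show ?thesis unfolding g_def mw_growth_def by auto
  qed
  have P0: "Sn 0 \<le> m" for m by (simp add: Sn_def)
  have ub: "\<exists>c. upper_env g n \<le> Suc c \<and> Sn c \<le> n - 1" if "1 \<le> n" for n
    using env_bound(1)[of g "\<lambda>c m. Sn c \<le> m", OF hb P0 _ that] by fastforce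
  have lb: "\<exists>c. lower_env g n \<le> Suc c \<and> Sn c \<le> n - 1" if "1 \<le> n" for n
    using env_bound(2)[of g "\<lambda>c m. Sn c \<le> m", OF hb P0 _ that] by fastforce
  define Sig where "Sig = set s0 \<union> \<Union> ((\<lambda>(r, t). set r \<union> set t) ` R)"
  have valid: "mw_valid R s0 Sig"
    unfolding mw_valid_def Sig_def using finite_R by (auto simp: in_listsI)
  have tb: "tight_bounds g (Lchain pos_nat (upper_env g)) (Lchain pos_nat (lower_env g))"
    unfolding tight_bounds_def using Lchain_cont Lchain_nonneg by auto
  have o1: "Lchain pos_nat (upper_env g) \<in> O(Tstar_inv T)" by (rule chain_bigo) (use ub in blast)
  have o2: "Lchain pos_nat (lower_env g) \<in> O(Tstar_inv T)" by (rule chain_bigo) (use lb in blast)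
  show ?thesis using valid unbounded tb o1 o2 unfolding g_def by blast
qed


end
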